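(* Assume $X_0\sim\nu$, conditions (H1) and (H2) hold, $\mathcal B\subset L^3(\nu)$, $\xi\in\mathcal B$, and $\sigma^2>0$. For $n\ge1$ let $U_n=\check\xi(X_n)-Q\check\xi(X_{n-1})$ and $T_n=U_1+\dots+U_n$. Then there is $C>0$ such that for all $n\ge1$ and all $t\in[-\sqrt n,\sqrt n]$, $$\big|\mathbb E[e^{itT_n/(\sigma\sqrt n)}]-e^{-t^2/2}\big|\le C\frac{|t|}{\sqrt n}.$$
   Context: $(E,\mathcal E)$ measurable space, $Q$ a transition probability with invariant probability $\nu$, $(X_n)_{n\ge0}$ a Markov chain with transition $Q$, $\xi:E\to\mathbb R$ measurable with $\nu(\xi)=0$. $\mathbf 1$ is the constant function 1. For a Banach space $(\mathcal B,\|\cdot\|)$ of measurable complex functions on $E$: (H1) means $Q$ is $\mathcal B$-geometrically ergodic, i.e. $\mathbf 1\in\mathcal B$, $\mathcal B$ embeds continuously in $L^1(\nu)$, $Q$ is bounded on $\mathcal B$ and $\|Q^nf-\nu(f)\mathbf 1\|\le C\kappa_0^n\|f\|$ for some $\kappa_0<1$, $C\ge0$, all $n\ge1$, $f\in\mathcal B$. Then $\check\xi=\sum_{n\ge0}Q^n\xi$, $\sigma^2=\nu(\check\xi^2)-\nu((Q\check\xi)^2)$, $\psi=Q(\check\xi^2)-(Q\check\xi)^2-\sigma^2\mathbf 1$. (H2) means $\sum_{p\ge0}\nu(|Q^p\psi|^{3/2})^{2/3}<\infty$. *)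

theory Defs
  imports "HOL-Probability.Probability" "HOL-Library.Function_Algebras"
begin

definition Qop :: "('e \<Rightarrow> 'e measure) \<Rightarrow> ('e \<Rightarrow> 'b::{banach,second_countable_topology}) \<Rightarrow> 'e \<Rightarrow> 'b" where
  "Qop Q f = (\<lambda>x. \<integral>y. f y \<partial>(Q x))"

definition transition_prob :: "'e measure \<Rightarrow> ('e \<Rightarrow> 'e measure) \<Rightarrow> bool" where
  "transition_prob E Q \<longleftrightarrow> Q \<in> measurable E (prob_algebra E)"

definition invariant_prob :: "'e measure \<Rightarrow> ('e \<Rightarrow> 'e measure) \<Rightarrow> 'e measure \<Rightarrow> bool" where
  "invariant_prob E Q \<nu> \<longleftrightarrow> prob_space \<nu> \<and> sets \<nu> = sets E \<and>
     (\<forall>A\<in>sets E. measure \<nu> A = (\<integral>x. measure (Q x) A \<partial>\<nu>))"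

definition markov_chain :: "'w measure \<Rightarrow> 'e measure \<Rightarrow> ('e \<Rightarrow> 'e measure) \<Rightarrow> (nat \<Rightarrow> 'w \<Rightarrow> 'e) \<Rightarrow> bool" where
  "markov_chain M E Q X \<longleftrightarrow> prob_space M \<and> (\<forall>n. X n \<in> measurable M E) \<and>
     (\<forall>n A. (\<forall>i\<le>Suc n. A i \<in> sets E) \<longrightarrow>
        measure M {\<omega>\<in>space M. \<forall>i\<le>Suc n. X i \<omega> \<in> A i}
        = (\<integral>\<omega>. indicator {\<omega>\<in>space M. \<forall>i\<le>n. X i \<omega> \<in> A i} \<omega> * measure (Q (X n \<omega>)) (A (Suc n)) \<partial>M))"

definition banach_fun_space :: "'e measure \<Rightarrow> ('e \<Rightarrow> complex) set \<Rightarrow> (('e \<Rightarrow> complex) \<Rightarrow> real) \<Rightarrow> bool" where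
  "banach_fun_space E B nB \<longleftrightarrow>
     B \<subseteq> borel_measurable E \<and> 0 \<in> B \<and>
     (\<forall>f\<in>B. \<forall>g\<in>B. f + g \<in> B) \<and> (\<forall>f\<in>B. \<forall>c::complex. (\<lambda>x. c * f x) \<in> B) \<and>
     (\<forall>f\<in>B. nB f \<ge> 0 \<and> (nB f = 0 \<longleftrightarrow> f = 0)) \<and>
     (\<forall>f\<in>B. \<forall>c::complex. nB (\<lambda>x. c * f x) = cmod c * nB f) \<and>
     (\<forall>f\<in>B. \<forall>g\<in>B. nB (f + g) \<le> nB f + nB g) \<and>
     (\<forall>s. (\<forall>n. s n \<in> B) \<longrightarrow> (\<forall>e>0. \<exists>N. \<forall>m\<ge>N. \<forall>n\<ge>N. nB (s m - s n) < e) \<longrightarrow>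
          (\<exists>g\<in>B. (\<lambda>n. nB (s n - g)) \<longlonglongrightarrow> 0))"

definition H1 :: "'e measure \<Rightarrow> 'e measure \<Rightarrow> ('e \<Rightarrow> 'e measure) \<Rightarrow> ('e \<Rightarrow> complex) set \<Rightarrow> (('e \<Rightarrow> complex) \<Rightarrow> real) \<Rightarrow> bool" where
  "H1 E \<nu> Q B nB \<longleftrightarrow>
     (\<lambda>_. 1) \<in> B \<and>
     (\<exists>c. \<forall>f\<in>B. integrable \<nu> f \<and> (\<integral>x. cmod (f x) \<partial>\<nu>) \<le> c * nB f) \<and>
     (\<forall>f\<in>B. Qop Q f \<in> B) \<and> (\<exists>K. \<forall>f\<in>B. nB (Qop Q f) \<le> K * nB f) \<and>
     (\<exists>C \<kappa>0. C \<ge> 0 \<and> \<kappa>0 < 1 \<and>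
        (\<forall>n\<ge>1. \<forall>f\<in>B. nB ((Qop Q ^^ n) f - (\<lambda>_. \<integral>x. f x \<partial>\<nu>)) \<le> C * \<kappa>0 ^ n * nB f))"

text \<open>xi-check = sum_{n>=0} Q^n xi, the series converging in B (real part taken; the limit
  is real nu-a.e.).\<close>
definition xi_check :: "('e \<Rightarrow> 'e measure) \<Rightarrow> ('e \<Rightarrow> complex) set \<Rightarrow> (('e \<Rightarrow> complex) \<Rightarrow> real) \<Rightarrow> ('e \<Rightarrow> real) \<Rightarrow> 'e \<Rightarrow> real" where
  "xi_check Q B nB \<xi> = (\<lambda>x. Re ((THE g. g \<in> B \<and>
      (\<lambda>N. nB ((\<Sum>n<N. (Qop Q ^^ n) (\<lambda>y. complex_of_real (\<xi> y))) - g)) \<longlonglongrightarrow> 0) x))"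

definition sigma2 :: "'e measure \<Rightarrow> ('e \<Rightarrow> 'e measure) \<Rightarrow> ('e \<Rightarrow> real) \<Rightarrow> real" where
  "sigma2 \<nu> Q xc = (\<integral>x. (xc x)\<^sup>2 \<partial>\<nu>) - (\<integral>x. (Qop Q xc x)\<^sup>2 \<partial>\<nu>)"

definition psi :: "'e measure \<Rightarrow> ('e \<Rightarrow> 'e measure) \<Rightarrow> ('e \<Rightarrow> real) \<Rightarrow> 'e \<Rightarrow> real" where
  "psi \<nu> Q xc = (\<lambda>x. Qop Q (\<lambda>y. (xc y)\<^sup>2) x - (Qop Q xc x)\<^sup>2 - sigma2 \<nu> Q xc)"

definition H2 :: "'e measure \<Rightarrow> ('e \<Rightarrow> 'e measure) \<Rightarrow> ('e \<Rightarrow> real) \<Rightarrow> bool" where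
  "H2 \<nu> Q xc \<longleftrightarrow>
     (\<forall>p. integrable \<nu> (\<lambda>x. \<bar>(Qop Q ^^ p) (psi \<nu> Q xc) x\<bar> powr (3/2))) \<and>
     summable (\<lambda>p. (\<integral>x. \<bar>(Qop Q ^^ p) (psi \<nu> Q xc) x\<bar> powr (3/2) \<partial>\<nu>) powr (2/3))"

end

theory Submission
  imports Defs
begin

lemma KB:
  fixes g :: "'e \<Rightarrow> real"
  assumes K: "K \<in> N \<rightarrow>\<^sub>M prob_algebra E" and g[measurable]: "g \<in> borel_measurable E"
    and int: "integrable (N \<bind> K) g" and ne: "space N \<noteq> {}"
  shows "integrable N (\<lambda>x. \<integral>y. g y \<partial>K x)"
    and "(\<integral>x. g x \<partial>(N \<bind> K)) = (\<integral>x. (\<integral>y. g y \<partial>K x) \<partial>N)"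
    and "AE x in N. integrable (K x) g"
proof -
  have K'[measurable]: "K \<in> N \<rightarrow>\<^sub>M subprob_algebra E" using K by (rule measurable_prob_algebraD)
  have Kx: "x \<in> space N \<Longrightarrow> prob_space (K x) \<and> sets (K x) = sets E" for x
    using measurable_space[OF K] by (auto simp: space_prob_algebra)
  have sb: "sets (N \<bind> K) = sets E" using Kx ne by (intro sets_bind) auto
  define P where "P x = (\<integral>\<^sup>+y. ennreal (g y) \<partial>K x)" for x
  define Nn where "Nn x = (\<integral>\<^sup>+y. ennreal (- g y) \<partial>K x)" for x
  have Pm[measurable]: "P \<in> borel_measurable N" unfolding P_def
    by (rule nn_integral_measurable_subprob_algebra2[where N=E]) (auto intro!: K')
  have Nm[measurable]: "Nn \<in> borel_measurable N" unfolding Nn_def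
    by (rule nn_integral_measurable_subprob_algebra2[where N=E]) (auto intro!: K')
  have gb: "g \<in> borel_measurable (N \<bind> K)" using sb by (simp cong: measurable_cong_sets)
  from int have i1: "(\<integral>\<^sup>+ x. ennreal (g x) \<partial>(N \<bind> K)) \<noteq> \<infinity>"
    and i2: "(\<integral>\<^sup>+ x. ennreal (- g x) \<partial>(N \<bind> K)) \<noteq> \<infinity>"
    unfolding real_integrable_def by auto
  have e1: "(\<integral>\<^sup>+ x. ennreal (g x) \<partial>(N \<bind> K)) = (\<integral>\<^sup>+x. P x \<partial>N)"
    unfolding P_def by (rule nn_integral_bind[OF _ K']) measurable
  have e2: "(\<integral>\<^sup>+ x. ennreal (- g x) \<partial>(N \<bind> K)) = (\<integral>\<^sup>+x. Nn x \<partial>N)"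
    unfolding Nn_def by (rule nn_integral_bind[OF _ K']) measurable
  have aP: "AE x in N. P x \<noteq> \<infinity>" using i1 e1 by (intro nn_integral_PInf_AE) auto
  have aN: "AE x in N. Nn x \<noteq> \<infinity>" using i2 e2 by (intro nn_integral_PInf_AE) auto
  show aei: "AE x in N. integrable (K x) g"
    using aP aN AE_space
  proof eventually_elim
    case (elim x)
    then have gK: "g \<in> borel_measurable (K x)" using Kx by (simp cong: measurable_cong_sets)
    show "integrable (K x) g" using elim gK unfolding real_integrable_def P_def Nn_def by auto
  qed
  have ae: "AE x in N. (\<integral>y. g y \<partial>K x) = enn2real (P x) - enn2real (Nn x)"
    using aP aN AE_space
  proof eventually_elim
    case (elim x)
    show ?case
    proof -
      from elim have True: "x \<in> space N" by simp
      then have gK: "g \<in> borel_measurable (K x)" using Kx by (simp cong: measurable_cong_sets)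
      have "integrable (K x) g" using elim gK unfolding real_integrable_def P_def Nn_def by auto
      then show ?thesis unfolding P_def Nn_def by (rule real_lebesgue_integral_def)
    qed
  qed
  have iP: "integrable N (\<lambda>x. enn2real (P x))"
  proof (rule integrableI_nonneg)
    have "(\<integral>\<^sup>+x. ennreal (enn2real (P x)) \<partial>N) \<le> (\<integral>\<^sup>+x. P x \<partial>N)"
      by (intro nn_integral_mono) (simp add: ennreal_enn2real_if)
    also have "\<dots> < \<infinity>" using i1 e1 by (simp add: less_top[symmetric])
    finally show "(\<integral>\<^sup>+x. ennreal (enn2real (P x)) \<partial>N) < \<infinity>" .
  qed auto
  have iN: "integrable N (\<lambda>x. enn2real (Nn x))"
  proof (rule integrableI_nonneg)
    have "(\<integral>\<^sup>+x. ennreal (enn2real (Nn x)) \<partial>N) \<le> (\<integral>\<^sup>+x. Nn x \<partial>N)"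
      by (intro nn_integral_mono) (simp add: ennreal_enn2real_if)
    also have "\<dots> < \<infinity>" using i2 e2 by (simp add: less_top[symmetric])
    finally show "(\<integral>\<^sup>+x. ennreal (enn2real (Nn x)) \<partial>N) < \<infinity>" .
  qed auto
  have Im[measurable]: "(\<lambda>x. \<integral>y. g y \<partial>K x) \<in> borel_measurable N"
    using measurable_compose[OF K' integral_measurable_subprob_algebra[OF g]] by simp
  have iD: "integrable N (\<lambda>x. enn2real (P x) - enn2real (Nn x))" using iP iN by auto
  show "integrable N (\<lambda>x. \<integral>y. g y \<partial>K x)"
    by (rule integrable_cong_AE_imp[OF iD Im]) (use ae in auto)
  have "(\<integral>x. (\<integral>y. g y \<partial>K x) \<partial>N) = (\<integral>x. enn2real (P x) - enn2real (Nn x) \<partial>N)"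
    by (rule integral_cong_AE[OF Im]) (use ae in auto)
  also have "\<dots> = (\<integral>x. enn2real (P x) \<partial>N) - (\<integral>x. enn2real (Nn x) \<partial>N)"
    using iP iN by simp
  also have "(\<integral>x. enn2real (P x) \<partial>N) = enn2real (\<integral>\<^sup>+x. P x \<partial>N)"
    using aP by (subst integral_eq_nn_integral) (auto intro!: arg_cong[where f=enn2real] nn_integral_cong_AE
        simp: ennreal_enn2real_if)
  also have "(\<integral>x. enn2real (Nn x) \<partial>N) = enn2real (\<integral>\<^sup>+x. Nn x \<partial>N)"
    using aN by (subst integral_eq_nn_integral) (auto intro!: arg_cong[where f=enn2real] nn_integral_cong_AE
        simp: ennreal_enn2real_if)
  finally show "(\<integral>x. g x \<partial>(N \<bind> K)) = (\<integral>x. (\<integral>y. g y \<partial>K x) \<partial>N)"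
    using real_lebesgue_integral_def[OF int] e1 e2 by simp
qed

lemma integrable_cplx:
  fixes g :: "'a \<Rightarrow> complex"
  assumes "integrable N (\<lambda>x. Re (g x))" "integrable N (\<lambda>x. Im (g x))"
  shows "integrable N g"
proof -
  have "integrable N (\<lambda>x. complex_of_real (Re (g x)) + \<i> * complex_of_real (Im (g x)))"
    using assms by (intro Bochner_Integration.integrable_add integrable_mult_right integrable_of_real) auto
  moreover have "(\<lambda>x. complex_of_real (Re (g x)) + \<i> * complex_of_real (Im (g x))) = g"
    by (rule ext) (simp add: complex_eq_iff)
  ultimately show ?thesis by simp
qed

lemma integral_cplx:
  fixes g :: "'a \<Rightarrow> complex"
  assumes "integrable N g"
  shows "integral\<^sup>L N g = complex_of_real (\<integral>x. Re (g x) \<partial>N) + \<i> * complex_of_real (\<integral>x. Im (g x) \<partial>N)"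
  using assms by (simp add: complex_eq_iff)

lemma KBc:
  fixes g :: "'e \<Rightarrow> complex"
  assumes K: "K \<in> N \<rightarrow>\<^sub>M prob_algebra E" and g[measurable]: "g \<in> borel_measurable E"
    and int: "integrable (N \<bind> K) g" and ne: "space N \<noteq> {}"
  shows "integrable N (\<lambda>x. \<integral>y. g y \<partial>K x)"
    and "(\<integral>x. g x \<partial>(N \<bind> K)) = (\<integral>x. (\<integral>y. g y \<partial>K x) \<partial>N)"
    and "AE x in N. integrable (K x) g"
proof -
  have K'[measurable]: "K \<in> N \<rightarrow>\<^sub>M subprob_algebra E" using K by (rule measurable_prob_algebraD)
  have gR[measurable]: "(\<lambda>x. Re (g x)) \<in> borel_measurable E" by measurable
  have gI[measurable]: "(\<lambda>x. Im (g x)) \<in> borel_measurable E" by measurable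
  have iR: "integrable (N \<bind> K) (\<lambda>x. Re (g x))" using int by auto
  have iI: "integrable (N \<bind> K) (\<lambda>x. Im (g x))" using int by auto
  note R = KB[OF K gR iR ne] and I = KB[OF K gI iI ne]
  show aei: "AE x in N. integrable (K x) g"
    using R(3) I(3) by eventually_elim (rule integrable_cplx)
  have ae: "AE x in N. (\<integral>y. g y \<partial>K x) = complex_of_real (\<integral>y. Re (g y) \<partial>K x) + \<i> * complex_of_real (\<integral>y. Im (g y) \<partial>K x)"
    using aei by eventually_elim (rule integral_cplx)
  have Im[measurable]: "(\<lambda>x. \<integral>y. g y \<partial>K x) \<in> borel_measurable N"
    using measurable_compose[OF K' integral_measurable_subprob_algebra[OF g]] by simp
  have iD: "integrable N (\<lambda>x. complex_of_real (\<integral>y. Re (g y) \<partial>K x) + \<i> * complex_of_real (\<integral>y. Im (g y) \<partial>K x))"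
    using R(1) I(1) by (intro Bochner_Integration.integrable_add integrable_mult_right integrable_of_real) auto
  show "integrable N (\<lambda>x. \<integral>y. g y \<partial>K x)"
    by (rule integrable_cong_AE_imp[OF iD Im]) (use ae in auto)
  have "(\<integral>x. (\<integral>y. g y \<partial>K x) \<partial>N) = (\<integral>x. complex_of_real (\<integral>y. Re (g y) \<partial>K x) + \<i> * complex_of_real (\<integral>y. Im (g y) \<partial>K x) \<partial>N)"
    by (rule integral_cong_AE[OF Im]) (use ae in auto)
  also have "\<dots> = complex_of_real (\<integral>x. Re (g x) \<partial>(N \<bind> K)) + \<i> * complex_of_real (\<integral>x. Im (g x) \<partial>(N \<bind> K))"
    using R(1) I(1) by (simp add: R(2) I(2))
  also have "\<dots> = (\<integral>x. g x \<partial>(N \<bind> K))" using integral_cplx[OF int] by simp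
  finally show "(\<integral>x. g x \<partial>(N \<bind> K)) = (\<integral>x. (\<integral>y. g y \<partial>K x) \<partial>N)" by simp
qed



locale bspace =
  fixes E :: "'e measure" and B :: "('e \<Rightarrow> complex) set" and nB :: "('e \<Rightarrow> complex) \<Rightarrow> real"
  assumes bfs: "banach_fun_space E B nB"
begin

lemma bfs': "B \<subseteq> borel_measurable E \<and> 0 \<in> B \<and>
     (\<forall>f\<in>B. \<forall>g\<in>B. f + g \<in> B) \<and> (\<forall>f\<in>B. \<forall>c::complex. (\<lambda>x. c * f x) \<in> B) \<and>
     (\<forall>f\<in>B. nB f \<ge> 0 \<and> (nB f = 0 \<longleftrightarrow> f = 0)) \<and>
     (\<forall>f\<in>B. \<forall>c::complex. nB (\<lambda>x. c * f x) = cmod c * nB f) \<and>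
     (\<forall>f\<in>B. \<forall>g\<in>B. nB (f + g) \<le> nB f + nB g) \<and>
     (\<forall>s. (\<forall>n. s n \<in> B) \<longrightarrow> (\<forall>e>0. \<exists>N. \<forall>m\<ge>N. \<forall>n\<ge>N. nB (s m - s n) < e) \<longrightarrow>
          (\<exists>g\<in>B. (\<lambda>n. nB (s n - g)) \<longlonglongrightarrow> 0))"
  using bfs unfolding banach_fun_space_def .

lemma Bmeas: "B \<subseteq> borel_measurable E" using bfs' by (rule conjunct1)
lemma B0: "0 \<in> B" using bfs'[THEN conjunct2, THEN conjunct1] .
lemma Badd: "f \<in> B \<Longrightarrow> g \<in> B \<Longrightarrow> f + g \<in> B"
  using bfs'[THEN conjunct2, THEN conjunct2, THEN conjunct1] by blast
lemma Bsc: "f \<in> B \<Longrightarrow> (\<lambda>x. c * f x) \<in> B"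
  using bfs'[THEN conjunct2, THEN conjunct2, THEN conjunct2, THEN conjunct1] by blast
lemma Bnn: "f \<in> B \<Longrightarrow> 0 \<le> nB f"
  using bfs'[THEN conjunct2, THEN conjunct2, THEN conjunct2, THEN conjunct2, THEN conjunct1] by blast
lemma Bz: "f \<in> B \<Longrightarrow> nB f = 0 \<longleftrightarrow> f = 0"
  using bfs'[THEN conjunct2, THEN conjunct2, THEN conjunct2, THEN conjunct2, THEN conjunct1] by blast
lemma Bnsc: "f \<in> B \<Longrightarrow> nB (\<lambda>x. c * f x) = cmod c * nB f"
  using bfs'[THEN conjunct2, THEN conjunct2, THEN conjunct2, THEN conjunct2, THEN conjunct2, THEN conjunct1] by blast
lemma Btri: "f \<in> B \<Longrightarrow> g \<in> B \<Longrightarrow> nB (f + g) \<le> nB f + nB g"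
  using bfs'[THEN conjunct2, THEN conjunct2, THEN conjunct2, THEN conjunct2, THEN conjunct2, THEN conjunct2, THEN conjunct1] by blast
lemma Bcomp: "(\<And>n. s n \<in> B) \<Longrightarrow> (\<forall>e>0. \<exists>N. \<forall>m\<ge>N. \<forall>n\<ge>N. nB (s m - s n) < e) \<Longrightarrow>
          (\<exists>g\<in>B. (\<lambda>n. nB (s n - g)) \<longlonglongrightarrow> 0)"
proof -
  assume a: "\<And>n. s n \<in> B" "\<forall>e>0. \<exists>N. \<forall>m\<ge>N. \<forall>n\<ge>N. nB (s m - s n) < e"
  have "\<forall>s. (\<forall>n. s n \<in> B) \<longrightarrow> (\<forall>e>0. \<exists>N. \<forall>m\<ge>N. \<forall>n\<ge>N. nB (s m - s n) < e) \<longrightarrow>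
          (\<exists>g\<in>B. (\<lambda>n. nB (s n - g)) \<longlonglongrightarrow> 0)"
    using bfs'[THEN conjunct2, THEN conjunct2, THEN conjunct2, THEN conjunct2, THEN conjunct2, THEN conjunct2, THEN conjunct2] .
  then show ?thesis using a by blast
qed

lemma Bneg: "f \<in> B \<Longrightarrow> - f \<in> B" and Bnneg: "f \<in> B \<Longrightarrow> nB (- f) = nB f"
proof -
  assume f: "f \<in> B"
  have e: "- f = (\<lambda>x. (-1) * f x)" by (rule ext) simp
  show "- f \<in> B" unfolding e by (rule Bsc[OF f])
  show "nB (- f) = nB f" unfolding e using Bnsc[OF f, of "-1"] by simp
qed

lemma Bdiff: "f \<in> B \<Longrightarrow> g \<in> B \<Longrightarrow> f - g \<in> B"
  using Badd[of f "- g"] Bneg[of g] by simp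

lemma Bdiff_sym: "f \<in> B \<Longrightarrow> g \<in> B \<Longrightarrow> nB (f - g) = nB (g - f)"
  using Bnneg[of "g - f"] Bdiff[of g f] by simp

lemma Bn0: "nB 0 = 0" using Bz[OF B0] by simp

lemma Bsum: "finite I \<Longrightarrow> (\<And>i. i \<in> I \<Longrightarrow> f i \<in> B) \<Longrightarrow> (\<Sum>i\<in>I. f i) \<in> B \<and> nB (\<Sum>i\<in>I. f i) \<le> (\<Sum>i\<in>I. nB (f i))"
proof (induction I rule: finite_induct)
  case empty
  have "(\<lambda>a. 0) = (0 :: 'e \<Rightarrow> complex)" by (simp add: zero_fun_def)
  then show ?case using B0 Bn0 by simp
next
  case (insert i I)
  then have fi: "f i \<in> B" and IH: "(\<Sum>i\<in>I. f i) \<in> B \<and> nB (\<Sum>i\<in>I. f i) \<le> (\<Sum>i\<in>I. nB (f i))" by auto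
  have eq: "(\<Sum>i\<in>insert i I. f i) = f i + (\<Sum>i\<in>I. f i)" by (rule sum.insert[OF insert(1,2)])
  have eq2: "(\<Sum>i\<in>insert i I. nB (f i)) = nB (f i) + (\<Sum>i\<in>I. nB (f i))" by (rule sum.insert[OF insert(1,2)])
  have "nB (f i + (\<Sum>i\<in>I. f i)) \<le> nB (f i) + (\<Sum>i\<in>I. nB (f i))"
    using Btri[OF fi] IH by (meson add_left_mono order_trans)
  then show ?case unfolding eq eq2 using Badd[OF fi] IH by blast
qed

lemma lim_unique:
  assumes s: "\<And>n. s n \<in> B" and g1: "g1 \<in> B" "(\<lambda>n. nB (s n - g1)) \<longlonglongrightarrow> 0"
    and g2: "g2 \<in> B" "(\<lambda>n. nB (s n - g2)) \<longlonglongrightarrow> 0"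
  shows "g1 = g2"
proof -
  have le: "nB (g1 - g2) \<le> nB (s n - g1) + nB (s n - g2)" for n
  proof -
    have "g1 - g2 = (g1 - s n) + (s n - g2)" by simp
    then have "nB (g1 - g2) \<le> nB (g1 - s n) + nB (s n - g2)"
      using Btri[OF Bdiff[OF g1(1) s[of n]] Bdiff[OF s[of n] g2(1)]] by simp
    then show ?thesis using Bdiff_sym[OF g1(1) s[of n]] by simp
  qed
  have "(\<lambda>n. nB (s n - g1) + nB (s n - g2)) \<longlonglongrightarrow> 0 + 0" by (intro tendsto_add g1(2) g2(2))
  then have "nB (g1 - g2) \<le> 0" using le by (intro LIMSEQ_le_const) (auto intro: exI[of _ 0])
  then have "nB (g1 - g2) = 0" using Bnn[OF Bdiff[OF g1(1) g2(1)]] by simp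
  then show ?thesis using Bz[OF Bdiff[OF g1(1) g2(1)]] by simp
qed


lemma tail_geo:
  fixes r :: real
  assumes "0 \<le> r" "r < 1" "m \<le> n"
  shows "(\<Sum>k\<in>{m..<n}. r ^ k) \<le> r ^ m / (1 - r)"
proof -
  have sp: "{..<n} = {..<m} \<union> {m..<n}" "{..<m} \<inter> {m..<n} = {}" using assms(3) by auto
  have "(\<Sum>k<n. r ^ k) = (\<Sum>k<m. r ^ k) + (\<Sum>k\<in>{m..<n}. r ^ k)"
    unfolding sp(1) by (rule sum.union_disjoint) (use sp(2) in auto)
  moreover have "(\<Sum>k<n. r ^ k) = (1 - r ^ n) / (1 - r)" "(\<Sum>k<m. r ^ k) = (1 - r ^ m) / (1 - r)"
    using sum_gp_strict[of r n] sum_gp_strict[of r m] assms by auto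
  ultimately have "(\<Sum>k\<in>{m..<n}. r ^ k) = (r ^ m - r ^ n) / (1 - r)" using assms by (simp add: diff_divide_distrib)
  also have "\<dots> \<le> r ^ m / (1 - r)" using assms by (intro divide_right_mono) auto
  finally show ?thesis .
qed

lemma xi_limit:
  fixes Q :: "'e \<Rightarrow> 'e measure" and \<nu> :: "'e measure" and f :: "'e \<Rightarrow> complex"
  assumes H: "H1 E \<nu> Q B nB" and fB: "f \<in> B" and mean0: "(\<integral>x. f x \<partial>\<nu>) = 0"
  shows "(THE g. g \<in> B \<and> (\<lambda>N. nB ((\<Sum>n<N. (Qop Q ^^ n) f) - g)) \<longlonglongrightarrow> 0) \<in> B"
proof -
  have QB: "\<And>h. h \<in> B \<Longrightarrow> Qop Q h \<in> B" using H unfolding H1_def by blast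
  obtain C \<kappa>0 where C: "C \<ge> 0" "\<kappa>0 < 1"
    and geo: "\<And>n h. n \<ge> 1 \<Longrightarrow> h \<in> B \<Longrightarrow> nB ((Qop Q ^^ n) h - (\<lambda>_. \<integral>x. h x \<partial>\<nu>)) \<le> C * \<kappa>0 ^ n * nB h"
    using H unfolding H1_def by blast
  have QnB: "(Qop Q ^^ n) f \<in> B" for n by (induction n) (auto intro: QB fB)
  have z: "(\<lambda>_. \<integral>x. f x \<partial>\<nu>) = 0" using mean0 by (simp add: zero_fun_def)
  define r where "r = max \<kappa>0 0"
  have r0: "0 \<le> r" and r1: "r < 1" using C unfolding r_def by auto
  have nf: "0 \<le> nB f" by (rule Bnn[OF fB])
  have bnd: "nB ((Qop Q ^^ n) f) \<le> C * r ^ n * nB f" if n: "n \<ge> 1" for n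
  proof (cases "0 \<le> \<kappa>0")
    case True
    then show ?thesis using geo[OF n fB] unfolding z r_def by simp
  next
    case False
    have "nB (Qop Q f) \<le> C * \<kappa>0 * nB f" using geo[OF _ fB, of 1] unfolding z by simp
    also have "\<dots> \<le> 0"
    proof -
      have "C * \<kappa>0 \<le> 0" using C False by (simp add: mult_nonneg_nonpos)
      then show ?thesis using nf by (simp add: mult_nonpos_nonneg)
    qed
    finally have "Qop Q f = 0" using Bz[OF QB[OF fB]] Bnn[OF QB[OF fB]] by simp
    have Q0: "Qop Q (\<lambda>_::'e. 0::complex) = (\<lambda>_. 0)" unfolding Qop_def by simp
    have "(Qop Q ^^ m) (\<lambda>_::'e. 0::complex) = (\<lambda>_. 0)" for m by (induction m) (simp_all add: Q0)
    moreover obtain m where "n = Suc m" using n by (cases n) auto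
    ultimately have "(Qop Q ^^ n) f = 0" using \<open>Qop Q f = 0\<close> by (simp add: funpow_Suc_right zero_fun_def del: funpow.simps)
    then show ?thesis using Bn0 C nf r0 by simp
  qed
  define S where "S N = (\<Sum>n<N. (Qop Q ^^ n) f)" for N
  have SB: "S N \<in> B" for N unfolding S_def using Bsum[of "{..<N}" "\<lambda>n. (Qop Q ^^ n) f"] QnB by simp
  have dif: "nB (S n - S m) \<le> C * nB f * (r ^ m / (1 - r))" if mn: "m \<le> n" and m1: "1 \<le> m" for m n
  proof -
    have sp: "{..<n} = {..<m} \<union> {m..<n}" "{..<m} \<inter> {m..<n} = {}" using mn by auto
    have "S n = S m + (\<Sum>k\<in>{m..<n}. (Qop Q ^^ k) f)"
      unfolding S_def sp(1) by (rule sum.union_disjoint) (use sp(2) in auto)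
    then have e: "S n - S m = (\<Sum>k\<in>{m..<n}. (Qop Q ^^ k) f)" by simp
    have "nB (S n - S m) \<le> (\<Sum>k\<in>{m..<n}. nB ((Qop Q ^^ k) f))" unfolding e using Bsum[of "{m..<n}" "\<lambda>k. (Qop Q ^^ k) f"] QnB by simp
    also have "\<dots> \<le> (\<Sum>k\<in>{m..<n}. C * nB f * r ^ k)"
      by (intro sum_mono) (use bnd m1 in \<open>auto simp: mult_ac\<close>)
    also have "\<dots> = C * nB f * (\<Sum>k\<in>{m..<n}. r ^ k)" by (simp add: sum_distrib_left)
    also have "\<dots> \<le> C * nB f * (r ^ m / (1 - r))"
      by (intro mult_left_mono tail_geo) (use r0 r1 mn C nf in auto)
    finally show ?thesis .
  qed
  have cauchy: "\<forall>e>0. \<exists>N. \<forall>m\<ge>N. \<forall>n\<ge>N. nB (S m - S n) < e"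
  proof (intro allI impI)
    fix e :: real assume e: "0 < e"
    have "(\<lambda>N. C * nB f * (r ^ N / (1 - r))) \<longlonglongrightarrow> C * nB f * (0 / (1 - r))"
      by (intro tendsto_mult tendsto_const tendsto_divide LIMSEQ_power_zero) (use r0 r1 in auto)
    then have "\<forall>\<^sub>F N in sequentially. C * nB f * (r ^ N / (1 - r)) < e" using e by (simp add: order_tendsto_iff)
    then obtain N0 where N0: "\<And>N. N \<ge> N0 \<Longrightarrow> C * nB f * (r ^ N / (1 - r)) < e" by (auto simp: eventually_sequentially)
    define N where "N = max N0 1"
    have key: "nB (S n - S m) < e" if "N \<le> m" "m \<le> n" for m n
    proof -
      have "nB (S n - S m) \<le> C * nB f * (r ^ m / (1 - r))" using dif[of m n] that by (simp add: N_def)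
      also have "\<dots> < e" using N0[of m] that by (simp add: N_def)
      finally show ?thesis .
    qed
    show "\<exists>N. \<forall>m\<ge>N. \<forall>n\<ge>N. nB (S m - S n) < e"
    proof (intro exI[of _ N] allI impI)
      fix m n assume "N \<le> m" "N \<le> n"
      show "nB (S m - S n) < e"
      proof (cases "n \<le> m")
        case True then show ?thesis using key[of n m] \<open>N \<le> n\<close> by simp
      next
        case False then show ?thesis using key[of m n] \<open>N \<le> m\<close> Bdiff_sym[OF SB SB, of m n] by simp
      qed
    qed
  qed
  obtain g where g: "g \<in> B" "(\<lambda>n. nB (S n - g)) \<longlonglongrightarrow> 0" using Bcomp[OF SB cauchy] by blast
  have "(THE g. g \<in> B \<and> (\<lambda>N. nB (S N - g)) \<longlonglongrightarrow> 0) = g"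
  proof (rule the_equality)
    show "g \<in> B \<and> (\<lambda>N. nB (S N - g)) \<longlonglongrightarrow> 0" using g by simp
    fix g' assume "g' \<in> B \<and> (\<lambda>N. nB (S N - g')) \<longlonglongrightarrow> 0"
    then show "g' = g" using lim_unique[OF SB _ _ g] by blast
  qed
  then show ?thesis using g(1) unfolding S_def by simp
qed

end



lemma pemeq: "prob_space N \<Longrightarrow> emeasure N A = ennreal (measure N A)"
  unfolding prob_space_def using finite_measure.emeasure_eq_measure by blast

locale mchain =
  fixes M :: "'w measure" and E :: "'e measure" and Q :: "'e \<Rightarrow> 'e measure"
    and X :: "nat \<Rightarrow> 'w \<Rightarrow> 'e" and \<nu> :: "'e measure"
  assumes tp: "transition_prob E Q" and mc: "markov_chain M E Q X"
    and inv: "invariant_prob E Q \<nu>" and X0: "distr M E (X 0) = \<nu>"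
begin

lemma probM: "prob_space M" using mc unfolding markov_chain_def by auto

lemma Xm[measurable]: "X n \<in> M \<rightarrow>\<^sub>M E" using mc unfolding markov_chain_def by auto

lemma Qp: "Q \<in> E \<rightarrow>\<^sub>M prob_algebra E" using tp unfolding transition_prob_def by auto

lemma Qs[measurable]: "Q \<in> E \<rightarrow>\<^sub>M subprob_algebra E" using Qp by (rule measurable_prob_algebraD)

lemma Qx: "x \<in> space E \<Longrightarrow> prob_space (Q x)" "x \<in> space E \<Longrightarrow> sets (Q x) = sets E"
  using measurable_space[OF Qp, of x] by (auto simp: space_prob_algebra)

lemma Qx_space: "x \<in> space E \<Longrightarrow> space (Q x) = space E"
  using Qx(2) by (rule sets_eq_imp_space_eq)

lemma nu: "prob_space \<nu>" "sets \<nu> = sets E"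
  using inv unfolding invariant_prob_def by auto

lemma nu_space: "space \<nu> = space E" using nu(2) by (rule sets_eq_imp_space_eq)

lemma spaceM_ne: "space M \<noteq> {}" using prob_space.not_empty[OF probM] .

definition pth :: "nat \<Rightarrow> 'w \<Rightarrow> nat \<Rightarrow> 'e" where
  "pth n \<omega> = (\<lambda>i\<in>{..n}. X i \<omega>)"

lemma pth_m[measurable]: "pth n \<in> M \<rightarrow>\<^sub>M PiM {..n} (\<lambda>_. E)"
  unfolding pth_def by (rule measurable_restrict) simp

lemma pth_app: "i \<le> n \<Longrightarrow> pth n \<omega> i = X i \<omega>" by (simp add: pth_def)

lemma mc_eq:
  assumes "\<forall>i\<le>Suc n. A i \<in> sets E"
  shows "measure M {\<omega>\<in>space M. \<forall>i\<le>Suc n. X i \<omega> \<in> A i}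
        = (\<integral>\<omega>. indicator {\<omega>\<in>space M. \<forall>i\<le>n. X i \<omega> \<in> A i} \<omega> * measure (Q (X n \<omega>)) (A (Suc n)) \<partial>M)"
proof -
  have "\<forall>n A. (\<forall>i\<le>Suc n. A i \<in> sets E) \<longrightarrow>
        measure M {\<omega>\<in>space M. \<forall>i\<le>Suc n. X i \<omega> \<in> A i}
        = (\<integral>\<omega>. indicator {\<omega>\<in>space M. \<forall>i\<le>n. X i \<omega> \<in> A i} \<omega> * measure (Q (X n \<omega>)) (A (Suc n)) \<partial>M)"
    using mc unfolding markov_chain_def by (elim conjE)
  then show ?thesis using assms by blast
qed

lemma step1:
  fixes F :: "(nat \<Rightarrow> 'e) \<Rightarrow> ennreal"
  assumes A[measurable]: "A \<in> sets E" and F[measurable]: "F \<in> borel_measurable (PiM {..n} (\<lambda>_. E))"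
  shows "(\<integral>\<^sup>+\<omega>. F (pth n \<omega>) * indicator A (X (Suc n) \<omega>) \<partial>M)
       = (\<integral>\<^sup>+\<omega>. F (pth n \<omega>) * emeasure (Q (X n \<omega>)) A \<partial>M)"
proof -
  interpret prob_space M by (rule probM)
  define D1 where "D1 = density M (\<lambda>\<omega>. indicator A (X (Suc n) \<omega>))"
  define D2 where "D2 = density M (\<lambda>\<omega>. emeasure (Q (X n \<omega>)) A)"
  define P1 where "P1 = distr D1 (PiM {..n} (\<lambda>_. E)) (pth n)"
  define P2 where "P2 = distr D2 (PiM {..n} (\<lambda>_. E)) (pth n)"
  have em: "(\<lambda>\<omega>. emeasure (Q (X n \<omega>)) A) \<in> borel_measurable M" by measurable
  have pm1: "pth n \<in> D1 \<rightarrow>\<^sub>M PiM {..n} (\<lambda>_. E)" unfolding D1_def by simp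
  have pm2: "pth n \<in> D2 \<rightarrow>\<^sub>M PiM {..n} (\<lambda>_. E)" unfolding D2_def by simp
  have box: "emeasure P1 (Pi\<^sub>E {..n} B) = emeasure P2 (Pi\<^sub>E {..n} B)"
    if B: "\<And>i. i \<in> {..n} \<Longrightarrow> B i \<in> sets E" for B
  proof -
    define S where "S = {\<omega>\<in>space M. \<forall>i\<le>n. X i \<omega> \<in> B i}"
    have Bs: "Pi\<^sub>E {..n} B \<in> sets (PiM {..n} (\<lambda>_. E))" using B by (intro sets_PiM_I_finite) auto
    have pre: "pth n -` Pi\<^sub>E {..n} B \<inter> space M = S"
      by (auto simp: S_def pth_def PiE_iff)
    have Sm: "S \<in> sets M" using pre pth_m Bs by (metis measurable_sets)
    define B' where "B' = B(Suc n := A)"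
    have B': "\<forall>i\<le>Suc n. B' i \<in> sets E" using B A by (auto simp: B'_def le_Suc_eq)
    have mceq: "measure M {\<omega>\<in>space M. \<forall>i\<le>Suc n. X i \<omega> \<in> B' i}
        = (\<integral>\<omega>. indicator {\<omega>\<in>space M. \<forall>i\<le>n. X i \<omega> \<in> B' i} \<omega> * measure (Q (X n \<omega>)) (B' (Suc n)) \<partial>M)"
      using mc_eq[OF B'] .
    have set1: "{\<omega>\<in>space M. \<forall>i\<le>Suc n. X i \<omega> \<in> B' i} = S \<inter> {\<omega>\<in>space M. X (Suc n) \<omega> \<in> A}"
      by (auto simp: S_def B'_def le_Suc_eq)
    have set2: "{\<omega>\<in>space M. \<forall>i\<le>n. X i \<omega> \<in> B' i} = S"
      by (auto simp: S_def B'_def)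
    have "emeasure P1 (Pi\<^sub>E {..n} B) = emeasure D1 S"
    proof -
      have sp: "space D1 = space M" unfolding D1_def by simp
      have "emeasure P1 (Pi\<^sub>E {..n} B) = emeasure D1 (pth n -` Pi\<^sub>E {..n} B \<inter> space D1)"
        unfolding P1_def by (rule emeasure_distr[OF pm1 Bs])
      then show ?thesis unfolding sp pre by simp
    qed
    also have "\<dots> = (\<integral>\<^sup>+\<omega>. indicator A (X (Suc n) \<omega>) * indicator S \<omega> \<partial>M)"
      unfolding D1_def by (rule emeasure_density) (use Sm in auto)
    also have "\<dots> = (\<integral>\<^sup>+\<omega>. indicator (S \<inter> {\<omega>\<in>space M. X (Suc n) \<omega> \<in> A}) \<omega> \<partial>M)"
      by (intro nn_integral_cong) (auto split: split_indicator)
    also have "\<dots> = emeasure M (S \<inter> {\<omega>\<in>space M. X (Suc n) \<omega> \<in> A})"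
      using Sm by (intro nn_integral_indicator sets.Int) auto
    also have "\<dots> = ennreal (measure M {\<omega>\<in>space M. \<forall>i\<le>Suc n. X i \<omega> \<in> B' i})"
      unfolding set1 by (rule emeasure_eq_measure)
    also have "\<dots> = ennreal (\<integral>\<omega>. indicator S \<omega> * measure (Q (X n \<omega>)) A \<partial>M)"
      unfolding mceq set2 by (simp only: B'_def fun_upd_same)
    also have "\<dots> = (\<integral>\<^sup>+\<omega>. ennreal (indicator S \<omega> * measure (Q (X n \<omega>)) A) \<partial>M)"
    proof (rule nn_integral_eq_integral[symmetric])
      have le1: "measure (Q (X n \<omega>)) A \<le> 1" if "\<omega> \<in> space M" for \<omega>
      proof -
        have "X n \<omega> \<in> space E" using that by (meson Xm measurable_space)
        then show ?thesis by (rule prob_space.prob_le_1[OF Qx(1)])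
      qed
      show "integrable M (\<lambda>\<omega>. indicator S \<omega> * measure (Q (X n \<omega>)) A)"
      proof (rule integrable_const_bound[where B=1])
        show "AE x in M. norm (indicator S x * measure (Q (X n x)) A) \<le> 1"
        proof (rule AE_I2)
          fix x assume "x \<in> space M"
          then show "norm (indicator S x * measure (Q (X n x)) A) \<le> 1"
            using le1[of x] by (simp add: indicator_def abs_mult)
        qed
        show "(\<lambda>\<omega>. indicator S \<omega> * measure (Q (X n \<omega>)) A) \<in> borel_measurable M"
          using Sm by (intro borel_measurable_times borel_measurable_indicator
              measurable_compose[OF Xm measurable_compose[OF Qs measurable_measure_subprob_algebra]] A)
      qed
      show "AE x in M. 0 \<le> indicator S x * measure (Q (X n x)) A"
        by (intro AE_I2 mult_nonneg_nonneg) auto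
    qed
    also have "\<dots> = (\<integral>\<^sup>+\<omega>. emeasure (Q (X n \<omega>)) A * indicator S \<omega> \<partial>M)"
    proof (intro nn_integral_cong)
      fix \<omega> assume "\<omega> \<in> space M"
      then have "X n \<omega> \<in> space E" by (meson Xm measurable_space)
      then interpret Qw: prob_space "Q (X n \<omega>)" by (rule Qx)
      show "ennreal (indicator S \<omega> * measure (Q (X n \<omega>)) A) = emeasure (Q (X n \<omega>)) A * indicator S \<omega>"
        by (auto split: split_indicator simp: Qw.emeasure_eq_measure)
    qed
    also have "\<dots> = emeasure D2 S"
      unfolding D2_def by (rule emeasure_density[symmetric]) (use Sm em in auto)
    also have "\<dots> = emeasure P2 (Pi\<^sub>E {..n} B)"
    proof -
      have sp: "space D2 = space M" unfolding D2_def by simp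
      have "emeasure P2 (Pi\<^sub>E {..n} B) = emeasure D2 (pth n -` Pi\<^sub>E {..n} B \<inter> space D2)"
        unfolding P2_def by (rule emeasure_distr[OF pm2 Bs])
      then show ?thesis unfolding sp pre by simp
    qed
    finally show ?thesis .
  qed
  have "P1 = P2"
  proof (rule measure_eqI_PiM_finite[where A="\<lambda>_. space (PiM {..n} (\<lambda>_. E))"])
    show "emeasure P1 (Pi\<^sub>E {..n} B) = emeasure P2 (Pi\<^sub>E {..n} B)" if "\<And>i. i \<in> {..n} \<Longrightarrow> B i \<in> sets E" for B
      using box that by blast
    show "range (\<lambda>_. space (PiM {..n} (\<lambda>_. E))) \<subseteq> prod_algebra {..n} (\<lambda>_. E)"
      by (auto simp: space_PiM intro!: prod_algebraI_finite)
    show "emeasure P1 (space (PiM {..n} (\<lambda>_. E))) \<noteq> \<infinity>"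
    proof -
      have "emeasure P1 (space (PiM {..n} (\<lambda>_. E))) = emeasure D1 (space M)"
      proof -
        have "pth n -` space (PiM {..n} (\<lambda>_. E)) \<inter> space M = space M"
          using measurable_space[OF pth_m] by auto
        then show ?thesis unfolding P1_def using pm1 by (simp add: emeasure_distr D1_def)
      qed
      also have "\<dots> = (\<integral>\<^sup>+\<omega>. indicator A (X (Suc n) \<omega>) * indicator (space M) \<omega> \<partial>M)"
        unfolding D1_def by (rule emeasure_density) auto
      also have "\<dots> \<le> (\<integral>\<^sup>+\<omega>. 1 \<partial>M)" by (intro nn_integral_mono) (auto split: split_indicator)
      also have "\<dots> = 1" using emeasure_space_1 by simp
      finally show ?thesis by (auto simp: top_unique)
    qed
  qed (auto simp: P1_def P2_def)
  then have "(\<integral>\<^sup>+p. F p \<partial>P1) = (\<integral>\<^sup>+p. F p \<partial>P2)" by simp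
  then show ?thesis unfolding P1_def P2_def D1_def D2_def using em
    by (simp add: nn_integral_distr nn_integral_density mult.commute)
qed


lemma kern_m: "(\<lambda>\<omega>. Q (X n \<omega>)) \<in> M \<rightarrow>\<^sub>M prob_algebra E"
  by (rule measurable_compose[OF Xm Qp])

lemma kern_ms[measurable]: "(\<lambda>\<omega>. Q (X n \<omega>)) \<in> M \<rightarrow>\<^sub>M subprob_algebra E"
  by (rule measurable_compose[OF Xm Qs])

lemma MkL_meas:
  fixes F :: "(nat \<Rightarrow> 'e) \<Rightarrow> real"
  assumes F[measurable]: "F \<in> borel_measurable (PiM {..n} (\<lambda>_. E))" and Fnn: "\<And>p. 0 \<le> F p"
  shows "distr (density M (\<lambda>\<omega>. F (pth n \<omega>))) E (X (Suc n))
       = density M (\<lambda>\<omega>. F (pth n \<omega>)) \<bind> (\<lambda>\<omega>. Q (X n \<omega>))"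
proof -
  define D where "D = density M (\<lambda>\<omega>. ennreal (F (pth n \<omega>)))"
  have sD: "sets D = sets M" "space D = space M" unfolding D_def by auto
  have kD: "(\<lambda>\<omega>. Q (X n \<omega>)) \<in> D \<rightarrow>\<^sub>M subprob_algebra E"
    using kern_ms by (simp add: measurable_cong_sets[OF sD(1) refl])
  have neD: "space D \<noteq> {}" using sD spaceM_ne by simp
  have sets_bind': "sets (D \<bind> (\<lambda>\<omega>. Q (X n \<omega>))) = sets E"
    by (rule sets_bind[OF _ neD]) (use measurable_space[OF Xm] Qx(2) sD in auto)
  show ?thesis unfolding D_def[symmetric]
  proof (rule measure_eqI)
    show "sets (distr D E (X (Suc n))) = sets (D \<bind> (\<lambda>\<omega>. Q (X n \<omega>)))"
      using sets_bind' by simp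
    fix A assume "A \<in> sets (distr D E (X (Suc n)))"
    then have A[measurable]: "A \<in> sets E" by simp
    have XD: "X (Suc n) \<in> D \<rightarrow>\<^sub>M E" using Xm by (simp add: measurable_cong_sets[OF sD(1) refl])
    have "emeasure (distr D E (X (Suc n))) A = emeasure D (X (Suc n) -` A \<inter> space D)"
      by (rule emeasure_distr[OF XD A])
    also have "\<dots> = (\<integral>\<^sup>+\<omega>. ennreal (F (pth n \<omega>)) * indicator (X (Suc n) -` A \<inter> space M) \<omega> \<partial>M)"
      unfolding D_def sD(2)[unfolded D_def] by (rule emeasure_density) measurable
    also have "\<dots> = (\<integral>\<^sup>+\<omega>. ennreal (F (pth n \<omega>)) * indicator A (X (Suc n) \<omega>) \<partial>M)"
      by (intro nn_integral_cong) (auto split: split_indicator)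
    also have "\<dots> = (\<integral>\<^sup>+\<omega>. ennreal (F (pth n \<omega>)) * emeasure (Q (X n \<omega>)) A \<partial>M)"
      by (rule step1[where F="\<lambda>p. ennreal (F p)"]) measurable
    also have "\<dots> = (\<integral>\<^sup>+\<omega>. emeasure (Q (X n \<omega>)) A \<partial>D)"
      unfolding D_def by (rule nn_integral_density[symmetric]) measurable
    also have "\<dots> = emeasure (D \<bind> (\<lambda>\<omega>. Q (X n \<omega>))) A"
      by (rule emeasure_bind[symmetric, OF neD kD A])
    finally show "emeasure (distr D E (X (Suc n))) A = emeasure (D \<bind> (\<lambda>\<omega>. Q (X n \<omega>))) A" .
  qed
qed

lemma nu_bind: "\<nu> \<bind> Q = \<nu>"
proof (rule measure_eqI)
  interpret nu: prob_space \<nu> by (rule nu(1))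
  have ne: "space \<nu> \<noteq> {}" using prob_space.not_empty[OF nu(1)] .
  have Qn: "Q \<in> \<nu> \<rightarrow>\<^sub>M subprob_algebra E" using Qs by (simp add: measurable_cong_sets[OF nu(2) refl])
  show sb: "sets (\<nu> \<bind> Q) = sets \<nu>"
    using nu(2) by (subst sets_bind[OF _ ne]) (auto simp: nu_space Qx(2))
  fix A assume "A \<in> sets (\<nu> \<bind> Q)"
  then have A: "A \<in> sets E" using sb nu(2) by simp
  have "emeasure (\<nu> \<bind> Q) A = (\<integral>\<^sup>+x. emeasure (Q x) A \<partial>\<nu>)"
    by (rule emeasure_bind[OF ne Qn A])
  also have "\<dots> = (\<integral>\<^sup>+x. ennreal (measure (Q x) A) \<partial>\<nu>)"
    by (intro nn_integral_cong) (simp add: nu_space pemeq[OF Qx(1)])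
  also have "\<dots> = ennreal (\<integral>x. measure (Q x) A \<partial>\<nu>)"
  proof (rule nn_integral_eq_integral)
    show "integrable \<nu> (\<lambda>x. measure (Q x) A)"
    proof (rule nu.integrable_const_bound[where B=1])
      show "AE x in \<nu>. norm (measure (Q x) A) \<le> 1"
        by (intro AE_I2) (simp add: nu_space prob_space.prob_le_1[OF Qx(1)])
      show "(\<lambda>x. measure (Q x) A) \<in> borel_measurable \<nu>"
        using measurable_compose[OF Qn measurable_measure_subprob_algebra[OF A]] .
    qed
  qed auto
  also have "\<dots> = ennreal (measure \<nu> A)" using inv A unfolding invariant_prob_def by simp
  also have "\<dots> = emeasure \<nu> A" by (simp add: pemeq[OF nu(1)])
  finally show "emeasure (\<nu> \<bind> Q) A = emeasure \<nu> A" .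
qed

lemma stationary: "distr M E (X k) = \<nu>"
proof (induction k)
  case 0 show ?case by (rule X0)
next
  case (Suc k)
  have "distr M E (X (Suc k)) = distr (density M (\<lambda>\<omega>. (\<lambda>_. 1::real) (pth k \<omega>))) E (X (Suc k))"
    by (simp add: density_1)
  also have "\<dots> = density M (\<lambda>\<omega>. (\<lambda>_. 1::real) (pth k \<omega>)) \<bind> (\<lambda>\<omega>. Q (X k \<omega>))"
    by (rule MkL_meas) auto
  also have "\<dots> = M \<bind> (\<lambda>\<omega>. Q (X k \<omega>))" by (simp add: density_1)
  also have "\<dots> = distr M E (X k) \<bind> Q"
    by (rule bind_distr[symmetric, OF Xm Qs spaceM_ne])
  also have "\<dots> = \<nu>" using Suc nu_bind by simp
  finally show ?case .
qed


lemma inv_int: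
  fixes f :: "'e \<Rightarrow> complex"
  assumes f[measurable]: "f \<in> borel_measurable E" and i: "integrable \<nu> f"
  shows "integrable \<nu> (\<lambda>x. \<integral>y. f y \<partial>Q x)" "(\<integral>x. (\<integral>y. f y \<partial>Q x) \<partial>\<nu>) = (\<integral>x. f x \<partial>\<nu>)"
    "AE x in \<nu>. integrable (Q x) f"
proof -
  have Qn: "Q \<in> \<nu> \<rightarrow>\<^sub>M prob_algebra E" using Qp by (simp add: measurable_cong_sets[OF nu(2) refl])
  have ne: "space \<nu> \<noteq> {}" using prob_space.not_empty[OF nu(1)] .
  have i': "integrable (\<nu> \<bind> Q) f" using i nu_bind by simp
  note K = KBc[OF Qn f i' ne]
  show "integrable \<nu> (\<lambda>x. \<integral>y. f y \<partial>Q x)" by (rule K(1))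
  show "(\<integral>x. (\<integral>y. f y \<partial>Q x) \<partial>\<nu>) = (\<integral>x. f x \<partial>\<nu>)" using K(2) nu_bind by simp
  show "AE x in \<nu>. integrable (Q x) f" by (rule K(3))
qed

lemma inv_int_real:
  fixes f :: "'e \<Rightarrow> real"
  assumes f[measurable]: "f \<in> borel_measurable E" and i: "integrable \<nu> f"
  shows "integrable \<nu> (\<lambda>x. \<integral>y. f y \<partial>Q x)" "(\<integral>x. (\<integral>y. f y \<partial>Q x) \<partial>\<nu>) = (\<integral>x. f x \<partial>\<nu>)"
    "AE x in \<nu>. integrable (Q x) f"
proof -
  have Qn: "Q \<in> \<nu> \<rightarrow>\<^sub>M prob_algebra E" using Qp by (simp add: measurable_cong_sets[OF nu(2) refl])
  have ne: "space \<nu> \<noteq> {}" using prob_space.not_empty[OF nu(1)] .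
  have i': "integrable (\<nu> \<bind> Q) f" using i nu_bind by simp
  note K = KB[OF Qn f i' ne]
  show "integrable \<nu> (\<lambda>x. \<integral>y. f y \<partial>Q x)" by (rule K(1))
  show "(\<integral>x. (\<integral>y. f y \<partial>Q x) \<partial>\<nu>) = (\<integral>x. f x \<partial>\<nu>)" using K(2) nu_bind by simp
  show "AE x in \<nu>. integrable (Q x) f" by (rule K(3))
qed

lemma int_X:
  fixes f :: "'e \<Rightarrow> 'b::{banach,second_countable_topology}"
  assumes f[measurable]: "f \<in> borel_measurable E"
  shows "integrable M (\<lambda>\<omega>. f (X k \<omega>)) \<longleftrightarrow> integrable \<nu> f"
    and "(\<integral>\<omega>. f (X k \<omega>) \<partial>M) = (\<integral>x. f x \<partial>\<nu>)"
proof -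
  show "integrable M (\<lambda>\<omega>. f (X k \<omega>)) \<longleftrightarrow> integrable \<nu> f"
    using integrable_distr_eq[OF Xm f, of k] stationary[of k] by simp
  show "(\<integral>\<omega>. f (X k \<omega>) \<partial>M) = (\<integral>x. f x \<partial>\<nu>)"
    using integral_distr[OF Xm f, of k] stationary[of k] by simp
qed

lemma AE_X:
  assumes "AE x in \<nu>. P x" and [measurable]: "Measurable.pred E P"
  shows "AE \<omega> in M. P (X k \<omega>)"
proof -
  have "AE x in distr M E (X k). P x" unfolding stationary by (rule assms(1))
  then show ?thesis by (subst (asm) AE_distr_iff) auto
qed

lemma MkL_pos:
  fixes F :: "(nat \<Rightarrow> 'e) \<Rightarrow> real" and g :: "'e \<Rightarrow> complex"
  assumes F[measurable]: "F \<in> borel_measurable (PiM {..n} (\<lambda>_. E))" and Fnn: "\<And>p. 0 \<le> F p"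
    and Fb: "\<And>p. F p \<le> c"
    and g[measurable]: "g \<in> borel_measurable E" and gi: "integrable \<nu> g"
  shows "integrable M (\<lambda>\<omega>. F (pth n \<omega>) *\<^sub>R (\<integral>y. g y \<partial>Q (X n \<omega>)))"
    and "(\<integral>\<omega>. F (pth n \<omega>) *\<^sub>R g (X (Suc n) \<omega>) \<partial>M)
       = (\<integral>\<omega>. F (pth n \<omega>) *\<^sub>R (\<integral>y. g y \<partial>Q (X n \<omega>)) \<partial>M)"
proof -
  define D where "D = density M (\<lambda>\<omega>. ennreal (F (pth n \<omega>)))"
  have sD: "sets D = sets M" "space D = space M" unfolding D_def by auto
  have kD: "(\<lambda>\<omega>. Q (X n \<omega>)) \<in> D \<rightarrow>\<^sub>M prob_algebra E"
    using kern_m by (simp add: measurable_cong_sets[OF sD(1) refl])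
  have neD: "space D \<noteq> {}" using sD spaceM_ne by simp
  have XD: "X (Suc n) \<in> D \<rightarrow>\<^sub>M E" using Xm by (simp add: measurable_cong_sets[OF sD(1) refl])
  have giM: "integrable M (\<lambda>\<omega>. g (X (Suc n) \<omega>))" using int_X(1)[OF g] gi by simp
  have iM: "integrable M (\<lambda>\<omega>. F (pth n \<omega>) *\<^sub>R g (X (Suc n) \<omega>))"
  proof (rule Bochner_Integration.integrable_bound[where f="\<lambda>\<omega>. c *\<^sub>R g (X (Suc n) \<omega>)"])
    show "integrable M (\<lambda>\<omega>. c *\<^sub>R g (X (Suc n) \<omega>))" using giM by simp
    show "AE x in M. norm (F (pth n x) *\<^sub>R g (X (Suc n) x)) \<le> norm (c *\<^sub>R g (X (Suc n) x))"
      using Fnn Fb by (intro AE_I2) (auto intro!: mult_right_mono order_trans[OF Fb] simp: abs_of_nonneg)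
  qed measurable
  have iD: "integrable D (\<lambda>\<omega>. g (X (Suc n) \<omega>))"
    unfolding D_def using iM Fnn by (subst integrable_density) auto
  have iB: "integrable (D \<bind> (\<lambda>\<omega>. Q (X n \<omega>))) g"
  proof -
    have "integrable (distr D E (X (Suc n))) g" using iD by (subst integrable_distr_eq[OF XD g])
    then show ?thesis using MkL_meas[OF F Fnn] unfolding D_def by simp
  qed
  note K = KBc[OF kD g iB neD]
  show "integrable M (\<lambda>\<omega>. F (pth n \<omega>) *\<^sub>R (\<integral>y. g y \<partial>Q (X n \<omega>)))"
    using K(1) Fnn unfolding D_def by (subst (asm) integrable_density) (auto intro!: measurable_compose[OF kern_ms integral_measurable_subprob_algebra])
  have "(\<integral>\<omega>. F (pth n \<omega>) *\<^sub>R g (X (Suc n) \<omega>) \<partial>M) = (\<integral>\<omega>. g (X (Suc n) \<omega>) \<partial>D)"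
    unfolding D_def using Fnn by (subst integral_density) auto
  also have "\<dots> = (\<integral>x. g x \<partial>distr D E (X (Suc n)))" by (rule integral_distr[symmetric, OF XD g])
  also have "\<dots> = (\<integral>x. g x \<partial>(D \<bind> (\<lambda>\<omega>. Q (X n \<omega>))))" using MkL_meas[OF F Fnn] unfolding D_def by simp
  also have "\<dots> = (\<integral>\<omega>. (\<integral>y. g y \<partial>Q (X n \<omega>)) \<partial>D)" by (rule K(2))
  also have "\<dots> = (\<integral>\<omega>. F (pth n \<omega>) *\<^sub>R (\<integral>y. g y \<partial>Q (X n \<omega>)) \<partial>M)"
    unfolding D_def using Fnn by (subst integral_density) (auto intro!: measurable_compose[OF kern_ms integral_measurable_subprob_algebra])
  finally show "(\<integral>\<omega>. F (pth n \<omega>) *\<^sub>R g (X (Suc n) \<omega>) \<partial>M)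
       = (\<integral>\<omega>. F (pth n \<omega>) *\<^sub>R (\<integral>y. g y \<partial>Q (X n \<omega>)) \<partial>M)" .
qed


lemma cdecomp:
  fixes w z :: complex
  shows "w * z = max 0 (Re w) *\<^sub>R z - max 0 (- Re w) *\<^sub>R z
     + \<i> * (max 0 (Im w) *\<^sub>R z) - \<i> * (max 0 (- Im w) *\<^sub>R z)"
  by (simp add: complex_eq_iff max_def algebra_simps)

lemma lin4:
  fixes a b c d :: "'a \<Rightarrow> complex"
  assumes "integrable N a" "integrable N b" "integrable N c" "integrable N d"
  shows "(\<integral>x. a x - b x + \<i> * c x - \<i> * d x \<partial>N) = integral\<^sup>L N a - integral\<^sup>L N b + \<i> * integral\<^sup>L N c - \<i> * integral\<^sup>L N d"
  using assms by simp

lemma MkL_c: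
  fixes F :: "(nat \<Rightarrow> 'e) \<Rightarrow> complex" and g :: "'e \<Rightarrow> complex"
  assumes F[measurable]: "F \<in> borel_measurable (PiM {..n} (\<lambda>_. E))" and Fb: "\<And>p. cmod (F p) \<le> 1"
    and g[measurable]: "g \<in> borel_measurable E" and gi: "integrable \<nu> g"
  shows "integrable M (\<lambda>\<omega>. F (pth n \<omega>) * (\<integral>y. g y \<partial>Q (X n \<omega>)))"
    and "(\<integral>\<omega>. F (pth n \<omega>) * g (X (Suc n) \<omega>) \<partial>M)
       = (\<integral>\<omega>. F (pth n \<omega>) * (\<integral>y. g y \<partial>Q (X n \<omega>)) \<partial>M)"
proof -
  define F1 where "F1 p = max 0 (Re (F p))" for p
  define F2 where "F2 p = max 0 (- Re (F p))" for p
  define F3 where "F3 p = max 0 (Im (F p))" for p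
  define F4 where "F4 p = max 0 (- Im (F p))" for p
  have m: "F1 \<in> borel_measurable (PiM {..n} (\<lambda>_. E))" "F2 \<in> borel_measurable (PiM {..n} (\<lambda>_. E))"
    "F3 \<in> borel_measurable (PiM {..n} (\<lambda>_. E))" "F4 \<in> borel_measurable (PiM {..n} (\<lambda>_. E))"
    unfolding F1_def F2_def F3_def F4_def by measurable
  have nn: "\<And>p. 0 \<le> F1 p" "\<And>p. 0 \<le> F2 p" "\<And>p. 0 \<le> F3 p" "\<And>p. 0 \<le> F4 p"
    unfolding F1_def F2_def F3_def F4_def by auto
  have bd: "\<And>p. F1 p \<le> 1" "\<And>p. F2 p \<le> 1" "\<And>p. F3 p \<le> 1" "\<And>p. F4 p \<le> 1"
  proof -
    have "\<bar>Re (F p)\<bar> \<le> 1" "\<bar>Im (F p)\<bar> \<le> 1" for p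
      using abs_Re_le_cmod[of "F p"] abs_Im_le_cmod[of "F p"] Fb[of p] by linarith+
    then show "\<And>p. F1 p \<le> 1" "\<And>p. F2 p \<le> 1" "\<And>p. F3 p \<le> 1" "\<And>p. F4 p \<le> 1"
      unfolding F1_def F2_def F3_def F4_def by (auto simp: abs_le_iff)
  qed
  note P1 = MkL_pos[OF m(1) nn(1) bd(1) g gi] and P2 = MkL_pos[OF m(2) nn(2) bd(2) g gi]
    and P3 = MkL_pos[OF m(3) nn(3) bd(3) g gi] and P4 = MkL_pos[OF m(4) nn(4) bd(4) g gi]
  have giM: "integrable M (\<lambda>\<omega>. g (X (Suc n) \<omega>))" using int_X(1)[OF g] gi by simp
  have ib: "integrable M (\<lambda>\<omega>. G (pth n \<omega>) *\<^sub>R g (X (Suc n) \<omega>))"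
    if "G \<in> borel_measurable (PiM {..n} (\<lambda>_. E))" "\<And>p. 0 \<le> G p" "\<And>p. G p \<le> 1" for G
  proof (rule Bochner_Integration.integrable_bound[OF giM])
    show "(\<lambda>\<omega>. G (pth n \<omega>) *\<^sub>R g (X (Suc n) \<omega>)) \<in> borel_measurable M"
      using that(1) by measurable
    show "AE x in M. norm (G (pth n x) *\<^sub>R g (X (Suc n) x)) \<le> norm (g (X (Suc n) x))"
      using that(2,3) by (intro AE_I2) (auto intro!: mult_left_le_one_le simp: abs_of_nonneg)
  qed
  note I1 = ib[OF m(1) nn(1) bd(1)] and I2 = ib[OF m(2) nn(2) bd(2)]
    and I3 = ib[OF m(3) nn(3) bd(3)] and I4 = ib[OF m(4) nn(4) bd(4)]
  have dec: "\<And>p z. F p * z = F1 p *\<^sub>R z - F2 p *\<^sub>R z + \<i> * (F3 p *\<^sub>R z) - \<i> * (F4 p *\<^sub>R z)"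
    unfolding F1_def F2_def F3_def F4_def by (rule cdecomp)
  show "integrable M (\<lambda>\<omega>. F (pth n \<omega>) * (\<integral>y. g y \<partial>Q (X n \<omega>)))"
    unfolding dec by (intro Bochner_Integration.integrable_diff Bochner_Integration.integrable_add integrable_mult_right P1(1) P2(1) P3(1) P4(1))
  have "(\<integral>\<omega>. F (pth n \<omega>) * g (X (Suc n) \<omega>) \<partial>M)
      = (\<integral>\<omega>. F1 (pth n \<omega>) *\<^sub>R g (X (Suc n) \<omega>) \<partial>M) - (\<integral>\<omega>. F2 (pth n \<omega>) *\<^sub>R g (X (Suc n) \<omega>) \<partial>M)
       + \<i> * (\<integral>\<omega>. F3 (pth n \<omega>) *\<^sub>R g (X (Suc n) \<omega>) \<partial>M) - \<i> * (\<integral>\<omega>. F4 (pth n \<omega>) *\<^sub>R g (X (Suc n) \<omega>) \<partial>M)"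
    unfolding dec by (rule lin4[OF I1 I2 I3 I4])
  also have "\<dots> = (\<integral>\<omega>. F1 (pth n \<omega>) *\<^sub>R (\<integral>y. g y \<partial>Q (X n \<omega>)) \<partial>M) - (\<integral>\<omega>. F2 (pth n \<omega>) *\<^sub>R (\<integral>y. g y \<partial>Q (X n \<omega>)) \<partial>M)
       + \<i> * (\<integral>\<omega>. F3 (pth n \<omega>) *\<^sub>R (\<integral>y. g y \<partial>Q (X n \<omega>)) \<partial>M) - \<i> * (\<integral>\<omega>. F4 (pth n \<omega>) *\<^sub>R (\<integral>y. g y \<partial>Q (X n \<omega>)) \<partial>M)"
    by (simp only: P1(2) P2(2) P3(2) P4(2))
  also have "\<dots> = (\<integral>\<omega>. F (pth n \<omega>) * (\<integral>y. g y \<partial>Q (X n \<omega>)) \<partial>M)"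
    unfolding dec by (rule lin4[OF P1(1) P2(1) P3(1) P4(1), symmetric])
  finally show "(\<integral>\<omega>. F (pth n \<omega>) * g (X (Suc n) \<omega>) \<partial>M)
       = (\<integral>\<omega>. F (pth n \<omega>) * (\<integral>y. g y \<partial>Q (X n \<omega>)) \<partial>M)" .
qed

end


lemma young32:
  fixes a b :: real
  assumes "0 \<le> a" "0 \<le> b"
  shows "a * b \<le> a ^ 3 / 3 + 2 / 3 * b powr (3/2)"
proof -
  have "a * b \<le> a powr 3 / 3 + b powr (3/2) / (3/2)"
    by (rule Youngs_inequality) (use assms in auto)
  moreover have "a powr 3 = a ^ 3" using powr_realpow'[of a 3] assms by simp
  ultimately show ?thesis by simp
qed

lemma holder32:
  fixes A B :: "'a \<Rightarrow> real"
  assumes Am[measurable]: "A \<in> borel_measurable N" and Bm[measurable]: "B \<in> borel_measurable N"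
    and An: "\<And>x. 0 \<le> A x" and Bn: "\<And>x. 0 \<le> B x"
    and iA: "integrable N (\<lambda>x. A x ^ 3)" and iB: "integrable N (\<lambda>x. B x powr (3/2))"
  shows "integrable N (\<lambda>x. A x * B x)"
    and "(\<integral>x. A x * B x \<partial>N) \<le> (\<integral>x. A x ^ 3 \<partial>N) powr (1/3) * (\<integral>x. B x powr (3/2) \<partial>N) powr (2/3)"
proof -
  show iAB: "integrable N (\<lambda>x. A x * B x)"
  proof (rule Bochner_Integration.integrable_bound[where f="\<lambda>x. A x ^ 3 / 3 + 2 / 3 * B x powr (3/2)"])
    show "integrable N (\<lambda>x. A x ^ 3 / 3 + 2 / 3 * B x powr (3/2))" using iA iB by auto
    show "AE x in N. norm (A x * B x) \<le> norm (A x ^ 3 / 3 + 2 / 3 * B x powr (3/2))"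
      using young32[OF An Bn] An Bn by (intro AE_I2) (auto simp: abs_mult)
  qed measurable
  define \<alpha> where "\<alpha> = (\<integral>x. A x ^ 3 \<partial>N)"
  define \<beta> where "\<beta> = (\<integral>x. B x powr (3/2) \<partial>N)"
  have a0: "0 \<le> \<alpha>" unfolding \<alpha>_def using An by (intro integral_nonneg_AE) auto
  have b0: "0 \<le> \<beta>" unfolding \<beta>_def by (intro integral_nonneg_AE) auto
  show "(\<integral>x. A x * B x \<partial>N) \<le> \<alpha> powr (1/3) * \<beta> powr (2/3)"
  proof (cases "\<alpha> = 0 \<or> \<beta> = 0")
    case True
    have "AE x in N. A x * B x = 0"
    proof (cases "\<alpha> = 0")
      case True
      have "AE x in N. A x ^ 3 = 0"
        using True iA An unfolding \<alpha>_def by (subst (asm) integral_nonneg_eq_0_iff_AE) auto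
      then show ?thesis by eventually_elim simp
    next
      case False
      then have "\<beta> = 0" using \<open>\<alpha> = 0 \<or> \<beta> = 0\<close> by simp
      have "AE x in N. B x powr (3/2) = 0"
        using \<open>\<beta> = 0\<close> iB unfolding \<beta>_def by (subst (asm) integral_nonneg_eq_0_iff_AE) auto
      then show ?thesis by eventually_elim simp
    qed
    then have "(\<integral>x. A x * B x \<partial>N) = 0" by (subst integral_cong_AE[where g="\<lambda>_. 0"]) auto
    then show ?thesis by simp
  next
    case False
    then have ap: "0 < \<alpha>" and bp: "0 < \<beta>" using a0 b0 by auto
    define u where "u = \<alpha> powr (1/3)"
    define v where "v = \<beta> powr (2/3)"
    have up: "0 < u" and vp: "0 < v" using ap bp by (auto simp: u_def v_def)
    have u3: "u ^ 3 = \<alpha>"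
    proof -
      have "u ^ 3 = u powr (real 3)" using powr_realpow[OF up, of 3] by simp
      also have "\<dots> = \<alpha>" unfolding u_def using ap by (simp add: powr_powr)
      finally show ?thesis .
    qed
    have v32: "v powr (3/2) = \<beta>" unfolding v_def using bp by (simp add: powr_powr)
    have pt: "A x * B x \<le> u * v * (A x ^ 3 / (3 * \<alpha>) + 2 / 3 * (B x powr (3/2) / \<beta>))" for x
    proof -
      have "(A x / u) * (B x / v) \<le> (A x / u) ^ 3 / 3 + 2 / 3 * (B x / v) powr (3/2)"
        by (rule young32) (use An Bn up vp in auto)
      also have "(A x / u) ^ 3 = A x ^ 3 / \<alpha>" by (simp add: power_divide u3)
      also have "(B x / v) powr (3/2) = B x powr (3/2) / \<beta>" by (simp add: powr_divide v32 Bn vp less_imp_le)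
      finally have "(A x / u) * (B x / v) \<le> A x ^ 3 / \<alpha> / 3 + 2 / 3 * (B x powr (3/2) / \<beta>)" .
      then have "u * v * ((A x / u) * (B x / v)) \<le> u * v * (A x ^ 3 / \<alpha> / 3 + 2 / 3 * (B x powr (3/2) / \<beta>))"
        using up vp by (intro mult_left_mono) auto
      then show ?thesis using up vp by (simp add: field_simps)
    qed
    have "(\<integral>x. A x * B x \<partial>N) \<le> (\<integral>x. u * v * (A x ^ 3 / (3 * \<alpha>) + 2 / 3 * (B x powr (3/2) / \<beta>)) \<partial>N)"
      by (rule integral_mono[OF iAB]) (use iA iB pt in auto)
    also have "\<dots> = u * v * (\<alpha> / (3 * \<alpha>) + 2 / 3 * (\<beta> / \<beta>))"
      using iA iB by (simp add: \<alpha>_def \<beta>_def)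
    also have "\<dots> = u * v" using ap bp by simp
    finally show ?thesis unfolding u_def v_def .
  qed
qed

lemma jensen3:
  fixes f :: "'a \<Rightarrow> real"
  assumes P: "prob_space P" and fm[measurable]: "f \<in> borel_measurable P" and i: "integrable P (\<lambda>x. \<bar>f x\<bar> ^ 3)"
  shows "\<bar>\<integral>x. f x \<partial>P\<bar> ^ 3 \<le> (\<integral>x. \<bar>f x\<bar> ^ 3 \<partial>P)"
proof -
  interpret prob_space P by (rule P)
  note H = holder32[of "\<lambda>x. \<bar>f x\<bar>" P "\<lambda>_. 1"]
  have h1: "integrable P (\<lambda>x. \<bar>f x\<bar>)" and h2: "(\<integral>x. \<bar>f x\<bar> \<partial>P) \<le> (\<integral>x. \<bar>f x\<bar> ^ 3 \<partial>P) powr (1/3)"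
    using H i by (auto simp: prob_space)
  have "\<bar>\<integral>x. f x \<partial>P\<bar> \<le> (\<integral>x. \<bar>f x\<bar> \<partial>P)" by (rule integral_abs_bound)
  also note h2
  finally have le: "\<bar>\<integral>x. f x \<partial>P\<bar> \<le> (\<integral>x. \<bar>f x\<bar> ^ 3 \<partial>P) powr (1/3)" .
  have a0: "0 \<le> (\<integral>x. \<bar>f x\<bar> ^ 3 \<partial>P)" by (intro integral_nonneg_AE) auto
  have "\<bar>\<integral>x. f x \<partial>P\<bar> ^ 3 \<le> ((\<integral>x. \<bar>f x\<bar> ^ 3 \<partial>P) powr (1/3)) ^ 3"
    by (rule power_mono[OF le]) simp
  also have "\<dots> = (\<integral>x. \<bar>f x\<bar> ^ 3 \<partial>P)"
  proof (cases "(\<integral>x. \<bar>f x\<bar> ^ 3 \<partial>P) = 0")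
    case False
    then have p: "0 < (\<integral>x. \<bar>f x\<bar> ^ 3 \<partial>P)" using a0 by (simp add: less_le)
    have "((\<integral>x. \<bar>f x\<bar> ^ 3 \<partial>P) powr (1/3)) ^ 3 = ((\<integral>x. \<bar>f x\<bar> ^ 3 \<partial>P) powr (1/3)) powr (real 3)"
      using powr_realpow[of "(\<integral>x. \<bar>f x\<bar> ^ 3 \<partial>P) powr (1/3)" 3] p by simp
    also have "\<dots> = (\<integral>x. \<bar>f x\<bar> ^ 3 \<partial>P)" using p by (simp add: powr_powr)
    finally show ?thesis .
  qed simp
  finally show ?thesis .
qed


context mchain begin

lemma Qop_m[measurable]:
  fixes f :: "'e \<Rightarrow> 'b::{banach,second_countable_topology}"
  assumes [measurable]: "f \<in> borel_measurable E"
  shows "Qop Q f \<in> borel_measurable E"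
  unfolding Qop_def by (rule measurable_compose[OF Qs integral_measurable_subprob_algebra]) simp

lemma Qpow_m:
  fixes f :: "'e \<Rightarrow> real"
  assumes "f \<in> borel_measurable E"
  shows "(Qop Q ^^ p) f \<in> borel_measurable E"
  by (induction p) (use assms in auto)

end

lemma abs_le_cube: "\<bar>x::real\<bar> \<le> 1 + \<bar>x\<bar> ^ 3"
proof (cases "\<bar>x\<bar> \<le> 1")
  case False
  then have "1 \<le> \<bar>x\<bar>^2" by (intro one_le_power) auto
  then have "\<bar>x\<bar> * 1 \<le> \<bar>x\<bar> * \<bar>x\<bar>^2" by (intro mult_left_mono) auto
  then show ?thesis by (simp add: power3_eq_cube power2_eq_square)
next
  case True
  have "0 \<le> \<bar>x\<bar> ^ 3" by simp
  then show ?thesis using True by linarith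
qed

lemma sq_le_cube: "(x::real) ^ 2 \<le> 1 + \<bar>x\<bar> ^ 3"
proof (cases "\<bar>x\<bar> \<le> 1")
  case True
  then have "x^2 \<le> 1" by (simp add: abs_square_le_1)
  then show ?thesis by (smt (verit) zero_le_power abs_ge_zero)
next
  case False
  then have "\<bar>x\<bar>^2 * 1 \<le> \<bar>x\<bar>^2 * \<bar>x\<bar>" by (intro mult_left_mono) auto
  then show ?thesis by (simp add: power3_eq_cube power2_eq_square)
qed

lemma abs_le_pow32: "\<bar>x::real\<bar> \<le> 1 + \<bar>x\<bar> powr (3/2)"
proof (cases "\<bar>x\<bar> \<le> 1")
  case False
  then have "\<bar>x\<bar> powr 1 \<le> \<bar>x\<bar> powr (3/2)" by (intro powr_mono) auto
  then show ?thesis by simp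
qed (smt (verit) powr_ge_zero)

locale setting = mchain M E Q X \<nu> for M :: "'w measure" and E :: "'e measure" and Q X \<nu> +
  fixes xc :: "'e \<Rightarrow> real"
  assumes xcm[measurable]: "xc \<in> borel_measurable E"
    and xc3: "integrable \<nu> (\<lambda>x. \<bar>xc x\<bar> ^ 3)"
    and H2i: "\<And>p. integrable \<nu> (\<lambda>x. \<bar>(Qop Q ^^ p) (psi \<nu> Q xc) x\<bar> powr (3/2))"
    and H2s: "summable (\<lambda>p. (\<integral>x. \<bar>(Qop Q ^^ p) (psi \<nu> Q xc) x\<bar> powr (3/2) \<partial>\<nu>) powr (2/3))"
    and sigp: "0 < sigma2 \<nu> Q xc"
begin

abbreviation "qx \<equiv> Qop Q xc"
abbreviation "\<sigma>2 \<equiv> sigma2 \<nu> Q xc"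
abbreviation "\<psi> \<equiv> psi \<nu> Q xc"

lemma nuE: "sets \<nu> = sets E" by (rule nu(2))

lemma bm_nu: "f \<in> borel_measurable E \<Longrightarrow> f \<in> borel_measurable \<nu>"
  by (simp add: measurable_cong_sets[OF nu(2) refl])

lemma xc1: "integrable \<nu> xc"
proof (rule Bochner_Integration.integrable_bound[where f="\<lambda>x. 1 + \<bar>xc x\<bar> ^ 3"])
  interpret nu: prob_space \<nu> by (rule nu(1))
  show "integrable \<nu> (\<lambda>x. 1 + \<bar>xc x\<bar> ^ 3)" using xc3 by simp
  show "AE x in \<nu>. norm (xc x) \<le> norm (1 + \<bar>xc x\<bar> ^ 3)" using abs_le_cube by (intro AE_I2) auto
qed (rule bm_nu, simp)

lemma xc2: "integrable \<nu> (\<lambda>x. (xc x)\<^sup>2)"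
proof (rule Bochner_Integration.integrable_bound[where f="\<lambda>x. 1 + \<bar>xc x\<bar> ^ 3"])
  interpret nu: prob_space \<nu> by (rule nu(1))
  show "integrable \<nu> (\<lambda>x. 1 + \<bar>xc x\<bar> ^ 3)" using xc3 by simp
  show "AE x in \<nu>. norm ((xc x)\<^sup>2) \<le> norm (1 + \<bar>xc x\<bar> ^ 3)" using sq_le_cube by (intro AE_I2) auto
qed (rule bm_nu, simp)

lemma mx3[measurable]: "(\<lambda>y. \<bar>xc y\<bar> ^ 3) \<in> borel_measurable E" by measurable
lemma mx2[measurable]: "(\<lambda>y. (xc y)\<^sup>2) \<in> borel_measurable E" by measurable

lemma AE_Q: "AE x in \<nu>. x \<in> space E \<and> integrable (Q x) (\<lambda>y. \<bar>xc y\<bar> ^ 3) \<and> integrable (Q x) xc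
    \<and> integrable (Q x) (\<lambda>y. (xc y)\<^sup>2)"
  using inv_int_real(3)[OF mx3 xc3] AE_space
proof eventually_elim
  case (elim x)
  then have x: "x \<in> space E" by (simp add: nu_space)
  interpret Qx: prob_space "Q x" using Qx(1)[OF x] .
  have m: "xc \<in> borel_measurable (Q x)" using xcm by (simp add: measurable_cong_sets[OF Qx(2)[OF x] refl])
  have i3: "integrable (Q x) (\<lambda>y. \<bar>xc y\<bar> ^ 3)" using elim by simp
  have i31: "integrable (Q x) (\<lambda>y. 1 + \<bar>xc y\<bar> ^ 3)" using i3 by simp
  have "integrable (Q x) xc"
  proof (rule Bochner_Integration.integrable_bound[OF i31 m])
    show "AE y in Q x. norm (xc y) \<le> norm (1 + \<bar>xc y\<bar> ^ 3)"
    proof (rule AE_I2)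
      fix y show "norm (xc y) \<le> norm (1 + \<bar>xc y\<bar> ^ 3)" using abs_le_cube[of "xc y"] by simp
    qed
  qed
  moreover have "integrable (Q x) (\<lambda>y. (xc y)\<^sup>2)"
  proof (rule Bochner_Integration.integrable_bound[OF i31])
    show "(\<lambda>y. (xc y)\<^sup>2) \<in> borel_measurable (Q x)" using m by simp
    show "AE y in Q x. norm ((xc y)\<^sup>2) \<le> norm (1 + \<bar>xc y\<bar> ^ 3)"
    proof (rule AE_I2)
      fix y show "norm ((xc y)\<^sup>2) \<le> norm (1 + \<bar>xc y\<bar> ^ 3)" using sq_le_cube[of "xc y"] by simp
    qed
  qed
  ultimately show ?case using elim x by auto
qed

lemma qx3_le: "AE x in \<nu>. \<bar>qx x\<bar> ^ 3 \<le> Qop Q (\<lambda>y. \<bar>xc y\<bar> ^ 3) x"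
  using AE_Q
proof eventually_elim
  case (elim x)
  have x: "x \<in> space E" using elim by simp
  have m: "xc \<in> borel_measurable (Q x)" using xcm by (simp add: measurable_cong_sets[OF Qx(2)[OF x] refl])
  show ?case unfolding Qop_def by (rule jensen3[OF Qx(1)[OF x] m]) (use elim in auto)
qed

lemma qx3: "integrable \<nu> (\<lambda>x. \<bar>qx x\<bar> ^ 3)" "(\<integral>x. \<bar>qx x\<bar> ^ 3 \<partial>\<nu>) \<le> (\<integral>x. \<bar>xc x\<bar> ^ 3 \<partial>\<nu>)"
proof -
  note I = inv_int_real[OF mx3 xc3]
  have i: "integrable \<nu> (Qop Q (\<lambda>y. \<bar>xc y\<bar> ^ 3))" using I(1) unfolding Qop_def by simp
  show i3: "integrable \<nu> (\<lambda>x. \<bar>qx x\<bar> ^ 3)"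
    by (rule Bochner_Integration.integrable_bound[OF i]) (use qx3_le in \<open>auto intro: bm_nu elim!: eventually_mono\<close>)
  have "(\<integral>x. \<bar>qx x\<bar> ^ 3 \<partial>\<nu>) \<le> (\<integral>x. Qop Q (\<lambda>y. \<bar>xc y\<bar> ^ 3) x \<partial>\<nu>)"
    by (rule integral_mono_AE[OF i3 i qx3_le])
  also have "\<dots> = (\<integral>x. \<bar>xc x\<bar> ^ 3 \<partial>\<nu>)" using I(2) unfolding Qop_def by simp
  finally show "(\<integral>x. \<bar>qx x\<bar> ^ 3 \<partial>\<nu>) \<le> (\<integral>x. \<bar>xc x\<bar> ^ 3 \<partial>\<nu>)" .
qed

lemma qx2: "integrable \<nu> (\<lambda>x. (qx x)\<^sup>2)"
proof (rule Bochner_Integration.integrable_bound[where f="\<lambda>x. 1 + \<bar>qx x\<bar> ^ 3"])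
  interpret nu: prob_space \<nu> by (rule nu(1))
  show "integrable \<nu> (\<lambda>x. 1 + \<bar>qx x\<bar> ^ 3)" using qx3(1) by simp
  show "AE x in \<nu>. norm ((qx x)\<^sup>2) \<le> norm (1 + \<bar>qx x\<bar> ^ 3)" using sq_le_cube by (intro AE_I2) auto
qed (rule bm_nu, simp)

lemma psi_m[measurable]: "\<psi> \<in> borel_measurable E"
proof -
  have a: "Qop Q (\<lambda>y. (xc y)\<^sup>2) \<in> borel_measurable E" by (rule Qop_m) simp
  have b: "qx \<in> borel_measurable E" by (rule Qop_m) simp
  show ?thesis unfolding psi_def using a b by simp
qed

lemma psi_int: "integrable \<nu> \<psi>" "(\<integral>x. \<psi> x \<partial>\<nu>) = 0"
proof -
  interpret nu: prob_space \<nu> by (rule nu(1))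
  note I = inv_int_real[OF mx2 xc2]
  have i: "integrable \<nu> (Qop Q (\<lambda>y. (xc y)\<^sup>2))" using I(1) unfolding Qop_def by simp
  show "integrable \<nu> \<psi>" unfolding psi_def using i qx2 by auto
  have "(\<integral>x. \<psi> x \<partial>\<nu>) = (\<integral>x. Qop Q (\<lambda>y. (xc y)\<^sup>2) x \<partial>\<nu>) - (\<integral>x. (qx x)\<^sup>2 \<partial>\<nu>) - \<sigma>2"
    unfolding psi_def using i qx2 by (simp add: nu.prob_space)
  also have "(\<integral>x. Qop Q (\<lambda>y. (xc y)\<^sup>2) x \<partial>\<nu>) = (\<integral>x. (xc x)\<^sup>2 \<partial>\<nu>)" using I(2) unfolding Qop_def by simp
  finally show "(\<integral>x. \<psi> x \<partial>\<nu>) = 0" unfolding sigma2_def by simp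
qed

definition fp :: "nat \<Rightarrow> 'e \<Rightarrow> real" where "fp p = (Qop Q ^^ p) \<psi>"

lemma fp_m[measurable]: "fp p \<in> borel_measurable E" unfolding fp_def by (rule Qpow_m) simp

lemma fp_Suc: "fp (Suc p) = Qop Q (fp p)" unfolding fp_def by simp

lemma fp_int: "integrable \<nu> (fp p)"
proof (rule Bochner_Integration.integrable_bound[where f="\<lambda>x. 1 + \<bar>fp p x\<bar> powr (3/2)"])
  interpret nu: prob_space \<nu> by (rule nu(1))
  show "integrable \<nu> (\<lambda>x. 1 + \<bar>fp p x\<bar> powr (3/2))" using H2i[of p] unfolding fp_def by simp
  show "AE x in \<nu>. norm (fp p x) \<le> norm (1 + \<bar>fp p x\<bar> powr (3/2))" using abs_le_pow32 by (intro AE_I2) auto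
qed (rule bm_nu, simp)

lemma fp_mean: "(\<integral>x. fp p x \<partial>\<nu>) = 0"
proof (induction p)
  case 0 show ?case using psi_int(2) unfolding fp_def by simp
next
  case (Suc p)
  then show ?case unfolding fp_Suc Qop_def using inv_int_real(2)[OF fp_m fp_int] by simp
qed

end



lemma cis_taylor2: "cmod (cis u - (1 + \<i> * complex_of_real u - complex_of_real (u^2 / 2))) \<le> \<bar>u\<bar>^3 / 6"
proof -
  have "cmod (iexp u - (\<Sum>k \<le> 2. (\<i> * u)^k / fact k)) \<le> \<bar>u\<bar>^(Suc 2) / fact (Suc 2)"
    by (rule iexp_approx1)
  moreover have "(\<Sum>k \<le> 2. (\<i> * complex_of_real u)^k / fact k) = 1 + \<i> * complex_of_real u - complex_of_real (u^2 / 2)"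
    by (simp add: numeral_2_eq_2 power2_eq_square field_simps)
  moreover have "fact (Suc 2) = (6::real)" by (simp add: numeral_3_eq_3 numeral_2_eq_2)
  ultimately show ?thesis by (simp add: cis_conv_exp numeral_3_eq_3[symmetric])
qed

lemma cis_m[measurable]:
  assumes [measurable]: "f \<in> borel_measurable N"
  shows "(\<lambda>x. cis (f x)) \<in> borel_measurable N"
proof -
  have "(\<lambda>x. cis (f x)) = (\<lambda>x. complex_of_real (cos (f x)) + \<i> * complex_of_real (sin (f x)))"
    by (rule ext) (simp add: complex_eq_iff)
  also have "\<dots> \<in> borel_measurable N" by measurable
  finally show ?thesis .
qed

lemma cis_taylor0: "cmod (cis u - 1) \<le> \<bar>u\<bar>"
proof -
  have "cmod (iexp u - (\<Sum>k \<le> 0. (\<i> * u)^k / fact k)) \<le> \<bar>u\<bar>^(Suc 0) / fact (Suc 0)"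
    by (rule iexp_approx1)
  then show ?thesis by (simp add: cis_conv_exp)
qed

lemma cube_sum_le: "\<bar>a - c\<bar> ^ 3 \<le> 4 * (\<bar>a\<bar> ^ 3 + \<bar>c::real\<bar> ^ 3)"
proof -
  have t: "\<bar>a - c\<bar> \<le> \<bar>a\<bar> + \<bar>c\<bar>" by simp
  have "\<bar>a - c\<bar> ^ 3 \<le> (\<bar>a\<bar> + \<bar>c\<bar>) ^ 3" by (rule power_mono[OF t]) simp
  also have "\<dots> \<le> 4 * (\<bar>a\<bar> ^ 3 + \<bar>c\<bar> ^ 3)"
  proof -
    define p where "p = \<bar>a\<bar>" define q where "q = \<bar>c\<bar>"
    have p: "0 \<le> p" and q: "0 \<le> q" by (auto simp: p_def q_def)
    have "0 \<le> (p + q) * (p - q)^2" using p q by simp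
    then have "(p + q) ^ 3 \<le> 4 * (p ^ 3 + q ^ 3)"
      by (simp add: power2_eq_square power3_eq_cube algebra_simps)
    then show ?thesis by (simp add: p_def q_def)
  qed
  finally show ?thesis .
qed


lemma poly_int:
  fixes u w :: "'a \<Rightarrow> real"
  assumes "prob_space P" "integrable P u" "integrable P w"
  shows "(\<integral>y. 1 + \<i> * complex_of_real (u y) - complex_of_real (w y) \<partial>P)
     = 1 + \<i> * complex_of_real (\<integral>y. u y \<partial>P) - complex_of_real (\<integral>y. w y \<partial>P)"
proof -
  interpret prob_space P by fact
  have "(\<integral>y. 1 + \<i> * complex_of_real (u y) - complex_of_real (w y) \<partial>P)
     = (\<integral>y. 1 + \<i> * complex_of_real (u y) \<partial>P) - (\<integral>y. complex_of_real (w y) \<partial>P)"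
    using assms by (intro Bochner_Integration.integral_diff Bochner_Integration.integrable_add integrable_mult_right
          integrable_of_real integrable_const) auto
  also have "(\<integral>y. 1 + \<i> * complex_of_real (u y) \<partial>P) = (\<integral>y. 1 \<partial>P) + (\<integral>y. \<i> * complex_of_real (u y) \<partial>P)"
    using assms by (intro Bochner_Integration.integral_add integrable_mult_right integrable_of_real integrable_const) auto
  finally show ?thesis by (simp add: prob_space)
qed

context setting begin

definition phi :: "real \<Rightarrow> 'e \<Rightarrow> complex" where
  "phi s x = cis (- (s * qx x)) * (\<integral>y. cis (s * xc y) \<partial>Q x)"

lemma qx_m[measurable]: "qx \<in> borel_measurable E" by (rule Qop_m) simp

lemma phi_m[measurable]: "phi s \<in> borel_measurable E"
proof -
  have "(\<lambda>x. \<integral>y. cis (s * xc y) \<partial>Q x) \<in> borel_measurable E"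
    by (rule measurable_compose[OF Qs integral_measurable_subprob_algebra]) simp
  then show ?thesis unfolding phi_def by simp
qed

lemma rho_bound:
  assumes x: "x \<in> space E" and i3: "integrable (Q x) (\<lambda>y. \<bar>xc y\<bar> ^ 3)"
    and i1: "integrable (Q x) xc" and i2: "integrable (Q x) (\<lambda>y. (xc y)\<^sup>2)"
  shows "cmod (phi s x - (1 - complex_of_real (s^2 / 2 * (\<psi> x + \<sigma>2))))
     \<le> 2 / 3 * \<bar>s\<bar> ^ 3 * (Qop Q (\<lambda>y. \<bar>xc y\<bar> ^ 3) x + \<bar>qx x\<bar> ^ 3)"
proof -
  interpret P: prob_space "Q x" by (rule Qx(1)[OF x])
  have m: "xc \<in> borel_measurable (Q x)" using xcm by (simp add: measurable_cong_sets[OF Qx(2)[OF x] refl])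
  define c where "c = qx x"
  have c: "c = (\<integral>y. xc y \<partial>Q x)" unfolding c_def Qop_def ..
  define u where "u y = s * (xc y - c)" for y
  define R where "R y = cis (u y) - (1 + \<i> * complex_of_real (u y) - complex_of_real ((u y)^2 / 2))" for y
  have um: "u \<in> borel_measurable (Q x)" unfolding u_def using m by simp
  have iu: "integrable (Q x) u" unfolding u_def using i1 by simp
  have u2: "(\<lambda>y. (u y)^2) = (\<lambda>y. s^2 * (xc y)^2 - 2 * s^2 * c * xc y + s^2 * c^2)"
    unfolding u_def by (rule ext) (simp add: power2_eq_square algebra_simps)
  have iu2: "integrable (Q x) (\<lambda>y. (u y)^2)" unfolding u2 using i1 i2 by simp
  have icis: "integrable (Q x) (\<lambda>y. cis (u y))"
    by (rule P.integrable_const_bound[where B=1]) (use um in auto)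
  have ipoly: "integrable (Q x) (\<lambda>y. 1 + \<i> * complex_of_real (u y) - complex_of_real ((u y)^2 / 2))"
  proof -
    have iu2': "integrable (Q x) (\<lambda>y. (u y)^2 / 2)" using iu2 by simp
    show ?thesis
      by (intro Bochner_Integration.integrable_diff Bochner_Integration.integrable_add integrable_mult_right
          integrable_of_real iu iu2' P.integrable_const)
  qed
  have iR: "integrable (Q x) R" unfolding R_def using icis ipoly by simp
  have intu: "(\<integral>y. u y \<partial>Q x) = 0" unfolding u_def using i1 by (simp add: c P.prob_space)
  have intu2: "(\<integral>y. (u y)^2 \<partial>Q x) = s^2 * ((\<integral>y. (xc y)^2 \<partial>Q x) - c^2)"
    unfolding u2 using i1 i2 by (simp add: c P.prob_space power2_eq_square algebra_simps)
  have phiu: "phi s x = (\<integral>y. cis (u y) \<partial>Q x)"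
  proof -
    have "phi s x = (\<integral>y. cis (- (s * c)) * cis (s * xc y) \<partial>Q x)" unfolding phi_def c_def by simp
    also have "\<dots> = (\<integral>y. cis (u y) \<partial>Q x)" unfolding u_def by (simp add: cis_mult algebra_simps)
    finally show ?thesis .
  qed
  have split: "(\<integral>y. cis (u y) \<partial>Q x) = (\<integral>y. 1 + \<i> * complex_of_real (u y) - complex_of_real ((u y)^2 / 2) \<partial>Q x) + (\<integral>y. R y \<partial>Q x)"
  proof -
    have "(\<lambda>y. cis (u y)) = (\<lambda>y. (1 + \<i> * complex_of_real (u y) - complex_of_real ((u y)^2 / 2)) + R y)"
      unfolding R_def by (rule ext) simp
    then show ?thesis using ipoly iR by simp
  qed
  have poly: "(\<integral>y. 1 + \<i> * complex_of_real (u y) - complex_of_real ((u y)^2 / 2) \<partial>Q x)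
      = 1 - complex_of_real (s^2 / 2 * ((\<integral>y. (xc y)^2 \<partial>Q x) - c^2))"
  proof -
    have iu2': "integrable (Q x) (\<lambda>y. (u y)^2 / 2)" using iu2 by simp
    have "(\<integral>y. 1 + \<i> * complex_of_real (u y) - complex_of_real ((u y)^2 / 2) \<partial>Q x)
       = 1 + \<i> * complex_of_real (\<integral>y. u y \<partial>Q x) - complex_of_real (\<integral>y. (u y)^2 / 2 \<partial>Q x)"
      by (rule poly_int[OF Qx(1)[OF x] iu iu2'])
    also have "(\<integral>y. (u y)^2 / 2 \<partial>Q x) = s^2 / 2 * ((\<integral>y. (xc y)^2 \<partial>Q x) - c^2)"
      using intu2 by simp
    finally show ?thesis using intu by simp
  qed
  have psic: "\<psi> x + \<sigma>2 = (\<integral>y. (xc y)^2 \<partial>Q x) - c^2"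
    unfolding psi_def c_def Qop_def by simp
  have diff: "phi s x - (1 - complex_of_real (s^2 / 2 * (\<psi> x + \<sigma>2))) = (\<integral>y. R y \<partial>Q x)"
    unfolding phiu split poly psic by simp
  have Rb: "cmod (R y) \<le> \<bar>s\<bar>^3 / 6 * (4 * (\<bar>xc y\<bar> ^ 3 + \<bar>c\<bar> ^ 3))" for y
  proof -
    have "cmod (R y) \<le> \<bar>u y\<bar>^3 / 6" unfolding R_def by (rule cis_taylor2)
    also have "\<bar>u y\<bar>^3 = \<bar>s\<bar>^3 * \<bar>xc y - c\<bar>^3" unfolding u_def by (simp add: abs_mult power_mult_distrib)
    also have "\<bar>s\<bar>^3 * \<bar>xc y - c\<bar>^3 \<le> \<bar>s\<bar>^3 * (4 * (\<bar>xc y\<bar> ^ 3 + \<bar>c\<bar> ^ 3))"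
      by (intro mult_left_mono cube_sum_le) simp
    finally show ?thesis by simp
  qed
  have ib: "integrable (Q x) (\<lambda>y. \<bar>s\<bar>^3 / 6 * (4 * (\<bar>xc y\<bar> ^ 3 + \<bar>c\<bar> ^ 3)))" using i3 by simp
  have "cmod (\<integral>y. R y \<partial>Q x) \<le> (\<integral>y. cmod (R y) \<partial>Q x)" by (rule integral_norm_bound)
  also have "\<dots> \<le> (\<integral>y. \<bar>s\<bar>^3 / 6 * (4 * (\<bar>xc y\<bar> ^ 3 + \<bar>c\<bar> ^ 3)) \<partial>Q x)"
    by (rule integral_mono[OF _ ib Rb]) (use iR in simp)
  also have "\<dots> = 2 / 3 * \<bar>s\<bar> ^ 3 * (Qop Q (\<lambda>y. \<bar>xc y\<bar> ^ 3) x + \<bar>qx x\<bar> ^ 3)"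
    using i3 by (simp add: Qop_def c_def P.prob_space algebra_simps)
  finally show ?thesis unfolding diff .
qed


definition Tp :: "nat \<Rightarrow> (nat \<Rightarrow> 'e) \<Rightarrow> real" where
  "Tp k p = (\<Sum>j\<in>{1..k}. xc (p j) - qx (p (j - 1)))"

definition Tw :: "nat \<Rightarrow> 'w \<Rightarrow> real" where
  "Tw k \<omega> = (\<Sum>j\<in>{1..k}. xc (X j \<omega>) - qx (X (j - 1) \<omega>))"

lemma Tw_pth: "Tw k \<omega> = Tp k (pth k \<omega>)"
  unfolding Tw_def Tp_def by (intro sum.cong) (auto simp: pth_app)

lemma comp_m: "i \<le> k \<Longrightarrow> (\<lambda>p. p i) \<in> PiM {..k} (\<lambda>_. E) \<rightarrow>\<^sub>M E"
  by (rule measurable_component_singleton) simp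

lemma Tp_m[measurable]: "Tp k \<in> borel_measurable (PiM {..k} (\<lambda>_. E))"
  unfolding Tp_def
proof (rule borel_measurable_sum)
  fix j assume j: "j \<in> {1..k}"
  have a: "(\<lambda>p. xc (p j)) \<in> borel_measurable (PiM {..k} (\<lambda>_. E))"
  proof -
    have "j \<le> k" using j by simp
    from measurable_compose[OF comp_m[OF this] xcm] show ?thesis by simp
  qed
  have b: "(\<lambda>p. qx (p (j - 1))) \<in> borel_measurable (PiM {..k} (\<lambda>_. E))"
  proof -
    have "j - 1 \<le> k" using j by (simp add: le_diff_conv trans_le_add1)
    from measurable_compose[OF comp_m[OF this] qx_m] show ?thesis by simp
  qed
  show "(\<lambda>p. xc (p j) - qx (p (j - 1))) \<in> borel_measurable (PiM {..k} (\<lambda>_. E))" using a b by simp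
qed

lemma Tw_m[measurable]: "Tw k \<in> borel_measurable M"
  unfolding Tw_def by measurable

lemma Tw_Suc: "Tw (Suc k) \<omega> = Tw k \<omega> + (xc (X (Suc k) \<omega>) - qx (X k \<omega>))"
  unfolding Tw_def by (simp add: sum.cl_ivl_Suc)

lemma Tw_0: "Tw 0 \<omega> = 0" unfolding Tw_def by simp

definition amp :: "real \<Rightarrow> nat \<Rightarrow> complex" where
  "amp s k = (\<integral>\<omega>. cis (s * Tw k \<omega>) \<partial>M)"

lemma nu_int_bdd:
  fixes g :: "'e \<Rightarrow> complex"
  assumes "g \<in> borel_measurable E" "\<And>y. cmod (g y) \<le> 1"
  shows "integrable \<nu> g"
proof -
  interpret nu: prob_space \<nu> by (rule nu(1))
  show ?thesis by (rule nu.integrable_const_bound[where B=1]) (use assms bm_nu in auto)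
qed

lemma bdd_int:
  fixes G h :: "'a \<Rightarrow> complex"
  assumes "integrable N h" "G \<in> borel_measurable N" "\<And>\<omega>. cmod (G \<omega>) \<le> 1"
  shows "integrable N (\<lambda>\<omega>. G \<omega> * h \<omega>)"
proof (rule Bochner_Integration.integrable_bound[OF assms(1)])
  show "(\<lambda>\<omega>. G \<omega> * h \<omega>) \<in> borel_measurable N" using assms by measurable
  show "AE x in N. norm (G x * h x) \<le> norm (h x)"
    using assms(3) by (intro AE_I2) (auto simp: norm_mult intro: mult_left_le_one_le)
qed

lemma rec1: "amp s (Suc k) = (\<integral>\<omega>. cis (s * Tw k \<omega>) * phi s (X k \<omega>) \<partial>M)"
proof -
  define F where "F p = cis (s * Tp k p) * cis (- (s * qx (p k)))" for p
  have Fm: "F \<in> borel_measurable (PiM {..k} (\<lambda>_. E))"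
    unfolding F_def using measurable_compose[OF comp_m[of k k] qx_m] by simp
  have Fb: "cmod (F p) \<le> 1" for p unfolding F_def by (simp add: norm_mult)
  have gm: "(\<lambda>y. cis (s * xc y)) \<in> borel_measurable E" by simp
  have gi: "integrable \<nu> (\<lambda>y. cis (s * xc y))" by (rule nu_int_bdd) auto
  note L = MkL_c[OF Fm Fb gm gi]
  have "amp s (Suc k) = (\<integral>\<omega>. F (pth k \<omega>) * cis (s * xc (X (Suc k) \<omega>)) \<partial>M)"
    unfolding amp_def F_def Tw_pth[symmetric]
    by (intro Bochner_Integration.integral_cong) (simp_all add: pth_app Tw_Suc cis_mult algebra_simps)
  also have "\<dots> = (\<integral>\<omega>. F (pth k \<omega>) * (\<integral>y. cis (s * xc y) \<partial>Q (X k \<omega>)) \<partial>M)" by (rule L(2))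
  also have "\<dots> = (\<integral>\<omega>. cis (s * Tw k \<omega>) * phi s (X k \<omega>) \<partial>M)"
    unfolding F_def Tw_pth phi_def by (intro Bochner_Integration.integral_cong) (simp_all add: pth_app)
  finally show ?thesis .
qed


definition C0 :: real where
  "C0 = (\<integral>x. \<bar>xc x\<bar> ^ 3 \<partial>\<nu>) powr (1/3) + (\<integral>x. \<bar>qx x\<bar> ^ 3 \<partial>\<nu>) powr (1/3)"

definition bet :: "('e \<Rightarrow> real) \<Rightarrow> real" where
  "bet f = (\<integral>x. \<bar>f x\<bar> powr (3/2) \<partial>\<nu>) powr (2/3)"

lemma holderX:
  fixes h f :: "'e \<Rightarrow> real"
  assumes hm[measurable]: "h \<in> borel_measurable E" and fm[measurable]: "f \<in> borel_measurable E"
    and h3: "integrable \<nu> (\<lambda>x. \<bar>h x\<bar> ^ 3)" and f32: "integrable \<nu> (\<lambda>x. \<bar>f x\<bar> powr (3/2))"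
  shows "integrable M (\<lambda>\<omega>. \<bar>h (X i \<omega>)\<bar> * \<bar>f (X j \<omega>)\<bar>)"
    "(\<integral>\<omega>. \<bar>h (X i \<omega>)\<bar> * \<bar>f (X j \<omega>)\<bar> \<partial>M) \<le> (\<integral>x. \<bar>h x\<bar> ^ 3 \<partial>\<nu>) powr (1/3) * bet f"
proof -
  have a: "integrable M (\<lambda>\<omega>. \<bar>h (X i \<omega>)\<bar> ^ 3)" using int_X(1)[of "\<lambda>x. \<bar>h x\<bar> ^ 3" i] h3 by simp
  have b: "integrable M (\<lambda>\<omega>. \<bar>f (X j \<omega>)\<bar> powr (3/2))" using int_X(1)[of "\<lambda>x. \<bar>f x\<bar> powr (3/2)" j] f32 by simp
  note H = holder32[of "\<lambda>\<omega>. \<bar>h (X i \<omega>)\<bar>" M "\<lambda>\<omega>. \<bar>f (X j \<omega>)\<bar>", OF _ _ _ _ a b]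
  show "integrable M (\<lambda>\<omega>. \<bar>h (X i \<omega>)\<bar> * \<bar>f (X j \<omega>)\<bar>)" using H by simp
  have "(\<integral>\<omega>. \<bar>h (X i \<omega>)\<bar> * \<bar>f (X j \<omega>)\<bar> \<partial>M)
     \<le> (\<integral>\<omega>. \<bar>h (X i \<omega>)\<bar> ^ 3 \<partial>M) powr (1/3) * (\<integral>\<omega>. \<bar>f (X j \<omega>)\<bar> powr (3/2) \<partial>M) powr (2/3)"
    using H by simp
  also have "(\<integral>\<omega>. \<bar>h (X i \<omega>)\<bar> ^ 3 \<partial>M) = (\<integral>x. \<bar>h x\<bar> ^ 3 \<partial>\<nu>)"
    using int_X(2)[of "\<lambda>x. \<bar>h x\<bar> ^ 3" i] by simp
  also have "(\<integral>\<omega>. \<bar>f (X j \<omega>)\<bar> powr (3/2) \<partial>M) = (\<integral>x. \<bar>f x\<bar> powr (3/2) \<partial>\<nu>)"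
    using int_X(2)[of "\<lambda>x. \<bar>f x\<bar> powr (3/2)" j] by simp
  finally show "(\<integral>\<omega>. \<bar>h (X i \<omega>)\<bar> * \<bar>f (X j \<omega>)\<bar> \<partial>M) \<le> (\<integral>x. \<bar>h x\<bar> ^ 3 \<partial>\<nu>) powr (1/3) * bet f"
    unfolding bet_def .
qed

lemma int32:
  fixes f :: "'e \<Rightarrow> real"
  assumes fm[measurable]: "f \<in> borel_measurable E" and f32: "integrable \<nu> (\<lambda>x. \<bar>f x\<bar> powr (3/2))"
  shows "integrable \<nu> f"
proof (rule Bochner_Integration.integrable_bound[where f="\<lambda>x. 1 + \<bar>f x\<bar> powr (3/2)"])
  interpret nu: prob_space \<nu> by (rule nu(1))
  show "integrable \<nu> (\<lambda>x. 1 + \<bar>f x\<bar> powr (3/2))" using f32 by simp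
  show "AE x in \<nu>. norm (f x) \<le> norm (1 + \<bar>f x\<bar> powr (3/2))" using abs_le_pow32 by (intro AE_I2) auto
qed (rule bm_nu, simp)

lemma rec_b:
  fixes f :: "'e \<Rightarrow> real"
  assumes fm[measurable]: "f \<in> borel_measurable E" and f32: "integrable \<nu> (\<lambda>x. \<bar>f x\<bar> powr (3/2))"
  shows "cmod ((\<integral>\<omega>. cis (s * Tw (Suc k) \<omega>) * complex_of_real (f (X (Suc k) \<omega>)) \<partial>M)
             - (\<integral>\<omega>. cis (s * Tw k \<omega>) * complex_of_real (Qop Q f (X k \<omega>)) \<partial>M))
         \<le> \<bar>s\<bar> * C0 * bet f"
proof -
  have fi: "integrable \<nu> f" by (rule int32[OF fm f32])
  have fX: "integrable M (\<lambda>\<omega>. complex_of_real (f (X (Suc k) \<omega>)))"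
    using int_X(1)[of f "Suc k"] fi by simp
  define A1 where "A1 \<omega> = cis (s * Tw (Suc k) \<omega>) * complex_of_real (f (X (Suc k) \<omega>))" for \<omega>
  define A2 where "A2 \<omega> = cis (s * Tw k \<omega>) * complex_of_real (f (X (Suc k) \<omega>))" for \<omega>
  have i1: "integrable M A1" unfolding A1_def by (rule bdd_int[OF fX]) auto
  have i2: "integrable M A2" unfolding A2_def by (rule bdd_int[OF fX]) auto
  define F where "F p = cis (s * Tp k p)" for p
  have Fm: "F \<in> borel_measurable (PiM {..k} (\<lambda>_. E))" unfolding F_def by simp
  have Fb: "cmod (F p) \<le> 1" for p unfolding F_def by simp
  have gi: "integrable \<nu> (\<lambda>y. complex_of_real (f y))" using fi by simp
  note L = MkL_c[OF Fm Fb _ gi]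
  have e2: "(\<integral>\<omega>. A2 \<omega> \<partial>M) = (\<integral>\<omega>. cis (s * Tw k \<omega>) * complex_of_real (Qop Q f (X k \<omega>)) \<partial>M)"
  proof -
    have "(\<integral>\<omega>. A2 \<omega> \<partial>M) = (\<integral>\<omega>. F (pth k \<omega>) * complex_of_real (f (X (Suc k) \<omega>)) \<partial>M)"
      unfolding A2_def F_def Tw_pth ..
    also have "\<dots> = (\<integral>\<omega>. F (pth k \<omega>) * (\<integral>y. complex_of_real (f y) \<partial>Q (X k \<omega>)) \<partial>M)"
      by (rule L(2)) simp
    also have "\<dots> = (\<integral>\<omega>. cis (s * Tw k \<omega>) * complex_of_real (Qop Q f (X k \<omega>)) \<partial>M)"
      unfolding F_def Tw_pth Qop_def by simp
    finally show ?thesis .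
  qed
  have ptw: "cmod (A1 \<omega> - A2 \<omega>) \<le> \<bar>s\<bar> * (\<bar>xc (X (Suc k) \<omega>)\<bar> * \<bar>f (X (Suc k) \<omega>)\<bar>
        + \<bar>qx (X k \<omega>)\<bar> * \<bar>f (X (Suc k) \<omega>)\<bar>)" for \<omega>
  proof -
    define U where "U = xc (X (Suc k) \<omega>) - qx (X k \<omega>)"
    have "A1 \<omega> - A2 \<omega> = cis (s * Tw k \<omega>) * (cis (s * U) - 1) * complex_of_real (f (X (Suc k) \<omega>))"
      unfolding A1_def A2_def U_def Tw_Suc by (simp add: cis_mult distrib_left algebra_simps)
    then have "cmod (A1 \<omega> - A2 \<omega>) = cmod (cis (s * U) - 1) * \<bar>f (X (Suc k) \<omega>)\<bar>"
      by (simp add: norm_mult)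
    also have "\<dots> \<le> \<bar>s * U\<bar> * \<bar>f (X (Suc k) \<omega>)\<bar>" by (intro mult_right_mono cis_taylor0) simp
    also have "\<dots> \<le> \<bar>s\<bar> * ((\<bar>xc (X (Suc k) \<omega>)\<bar> + \<bar>qx (X k \<omega>)\<bar>) * \<bar>f (X (Suc k) \<omega>)\<bar>)"
      unfolding U_def abs_mult mult.assoc by (intro mult_left_mono mult_right_mono abs_triangle_ineq4) auto
    finally show ?thesis by (simp add: algebra_simps)
  qed
  note h1 = holderX[OF xcm fm xc3 f32, of "Suc k" "Suc k"]
  note h2 = holderX[OF qx_m fm qx3(1) f32, of k "Suc k"]
  have "cmod ((\<integral>\<omega>. A1 \<omega> \<partial>M) - (\<integral>\<omega>. A2 \<omega> \<partial>M)) = cmod (\<integral>\<omega>. A1 \<omega> - A2 \<omega> \<partial>M)"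
    using i1 i2 by simp
  also have "\<dots> \<le> (\<integral>\<omega>. cmod (A1 \<omega> - A2 \<omega>) \<partial>M)" by (rule integral_norm_bound)
  also have "\<dots> \<le> (\<integral>\<omega>. \<bar>s\<bar> * (\<bar>xc (X (Suc k) \<omega>)\<bar> * \<bar>f (X (Suc k) \<omega>)\<bar>
        + \<bar>qx (X k \<omega>)\<bar> * \<bar>f (X (Suc k) \<omega>)\<bar>) \<partial>M)"
    by (rule integral_mono) (use i1 i2 h1(1) h2(1) ptw in auto)
  also have "\<dots> = \<bar>s\<bar> * ((\<integral>\<omega>. \<bar>xc (X (Suc k) \<omega>)\<bar> * \<bar>f (X (Suc k) \<omega>)\<bar> \<partial>M)
        + (\<integral>\<omega>. \<bar>qx (X k \<omega>)\<bar> * \<bar>f (X (Suc k) \<omega>)\<bar> \<partial>M))"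
    using h1(1) h2(1) by simp
  also have "\<dots> \<le> \<bar>s\<bar> * ((\<integral>x. \<bar>xc x\<bar> ^ 3 \<partial>\<nu>) powr (1/3) * bet f + (\<integral>x. \<bar>qx x\<bar> ^ 3 \<partial>\<nu>) powr (1/3) * bet f)"
    by (intro mult_left_mono add_mono h1(2) h2(2)) simp
  also have "\<dots> = \<bar>s\<bar> * C0 * bet f" unfolding C0_def by (simp add: algebra_simps)
  finally have "cmod ((\<integral>\<omega>. A1 \<omega> \<partial>M) - (\<integral>\<omega>. A2 \<omega> \<partial>M)) \<le> \<bar>s\<bar> * C0 * bet f" .
  then show ?thesis by (simp only: e2 A1_def)
qed


lemma fp_32: "integrable \<nu> (\<lambda>x. \<bar>fp p x\<bar> powr (3/2))" using H2i[of p] unfolding fp_def .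

lemma iter_b:
  "cmod (\<integral>\<omega>. cis (s * Tw (i + j) \<omega>) * complex_of_real (fp 0 (X (i + j) \<omega>)) \<partial>M)
    \<le> \<bar>s\<bar> * C0 * (\<Sum>p<j. bet (fp p)) + cmod (\<integral>\<omega>. cis (s * Tw i \<omega>) * complex_of_real (fp j (X i \<omega>)) \<partial>M)"
proof (induction j arbitrary: i)
  case 0 then show ?case by simp
next
  case (Suc j)
  have IH: "cmod (\<integral>\<omega>. cis (s * Tw (Suc i + j) \<omega>) * complex_of_real (fp 0 (X (Suc i + j) \<omega>)) \<partial>M)
    \<le> \<bar>s\<bar> * C0 * (\<Sum>p<j. bet (fp p)) + cmod (\<integral>\<omega>. cis (s * Tw (Suc i) \<omega>) * complex_of_real (fp j (X (Suc i) \<omega>)) \<partial>M)"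
    by (rule Suc.IH)
  have R: "cmod ((\<integral>\<omega>. cis (s * Tw (Suc i) \<omega>) * complex_of_real (fp j (X (Suc i) \<omega>)) \<partial>M)
             - (\<integral>\<omega>. cis (s * Tw i \<omega>) * complex_of_real (Qop Q (fp j) (X i \<omega>)) \<partial>M))
         \<le> \<bar>s\<bar> * C0 * bet (fp j)"
    by (rule rec_b[OF fp_m fp_32])
  have R': "cmod (\<integral>\<omega>. cis (s * Tw (Suc i) \<omega>) * complex_of_real (fp j (X (Suc i) \<omega>)) \<partial>M)
     \<le> \<bar>s\<bar> * C0 * bet (fp j) + cmod (\<integral>\<omega>. cis (s * Tw i \<omega>) * complex_of_real (fp (Suc j) (X i \<omega>)) \<partial>M)"
    using R norm_triangle_ineq2[of "\<integral>\<omega>. cis (s * Tw (Suc i) \<omega>) * complex_of_real (fp j (X (Suc i) \<omega>)) \<partial>M"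
        "\<integral>\<omega>. cis (s * Tw i \<omega>) * complex_of_real (Qop Q (fp j) (X i \<omega>)) \<partial>M"]
    unfolding fp_Suc by linarith
  have "i + Suc j = Suc i + j" by simp
  then show ?case using IH R' by (simp add: algebra_simps)
qed

definition S2 :: real where "S2 = (\<Sum>p. bet (fp p))"

lemma bet_nn: "0 \<le> bet f" unfolding bet_def by simp

lemma C0_nn: "0 \<le> C0" unfolding C0_def by simp

lemma bet_summable: "summable (\<lambda>p. bet (fp p))" using H2s unfolding bet_def fp_def .

lemma psi_term: "cmod (\<integral>\<omega>. cis (s * Tw m \<omega>) * complex_of_real (\<psi> (X m \<omega>)) \<partial>M) \<le> \<bar>s\<bar> * C0 * S2"
proof -
  have "cmod (\<integral>\<omega>. cis (s * Tw (0 + m) \<omega>) * complex_of_real (fp 0 (X (0 + m) \<omega>)) \<partial>M)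
    \<le> \<bar>s\<bar> * C0 * (\<Sum>p<m. bet (fp p)) + cmod (\<integral>\<omega>. cis (s * Tw 0 \<omega>) * complex_of_real (fp m (X 0 \<omega>)) \<partial>M)"
    by (rule iter_b)
  also have "(\<integral>\<omega>. cis (s * Tw 0 \<omega>) * complex_of_real (fp m (X 0 \<omega>)) \<partial>M) = 0"
  proof -
    have "(\<integral>\<omega>. cis (s * Tw 0 \<omega>) * complex_of_real (fp m (X 0 \<omega>)) \<partial>M) = complex_of_real (\<integral>\<omega>. fp m (X 0 \<omega>) \<partial>M)"
      by (simp add: Tw_0)
    also have "(\<integral>\<omega>. fp m (X 0 \<omega>) \<partial>M) = 0" using int_X(2)[OF fp_m, of m 0] fp_mean by simp
    finally show ?thesis by simp
  qed
  also have "(\<Sum>p<m. bet (fp p)) \<le> S2" unfolding S2_def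
    by (rule sum_le_suminf[OF bet_summable]) (auto simp: bet_nn)
  finally show ?thesis
    using C0_nn by (simp add: fp_def mult_left_mono mult_nonneg_nonneg order_trans)
qed


definition rr :: "real \<Rightarrow> 'e \<Rightarrow> complex" where
  "rr s x = phi s x - (1 - complex_of_real (s^2 / 2 * (\<psi> x + \<sigma>2)))"

lemma rr_m[measurable]: "rr s \<in> borel_measurable E" unfolding rr_def by measurable

lemma phi_bdd: "x \<in> space E \<Longrightarrow> cmod (phi s x) \<le> 1"
proof -
  assume x: "x \<in> space E"
  interpret P: prob_space "Q x" by (rule Qx(1)[OF x])
  have "cmod (\<integral>y. cis (s * xc y) \<partial>Q x) \<le> (\<integral>y. cmod (cis (s * xc y)) \<partial>Q x)" by (rule integral_norm_bound)
  also have "\<dots> = 1" by (simp add: P.prob_space)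
  finally show ?thesis unfolding phi_def by (simp add: norm_mult)
qed

lemma phi_int: "integrable \<nu> (phi s)"
proof -
  interpret nu: prob_space \<nu> by (rule nu(1))
  show ?thesis by (rule nu.integrable_const_bound[where B=1]) (auto simp: nu_space phi_bdd intro: bm_nu)
qed

lemma rr_int: "integrable \<nu> (rr s)"
proof -
  interpret nu: prob_space \<nu> by (rule nu(1))
  have "integrable \<nu> (\<lambda>x. phi s x - (1 - complex_of_real (s^2 / 2 * (\<psi> x + \<sigma>2))))"
    using phi_int psi_int(1) by (intro Bochner_Integration.integrable_diff Bochner_Integration.integrable_add
        integrable_of_real integrable_mult_right nu.integrable_const) auto
  then show ?thesis unfolding rr_def .
qed

lemma rr_bound_int: "(\<integral>x. cmod (rr s x) \<partial>\<nu>) \<le> 4 / 3 * \<bar>s\<bar> ^ 3 * (\<integral>x. \<bar>xc x\<bar> ^ 3 \<partial>\<nu>)"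
proof -
  note I = inv_int_real[OF mx3 xc3]
  have iQ: "integrable \<nu> (Qop Q (\<lambda>y. \<bar>xc y\<bar> ^ 3))" using I(1) unfolding Qop_def by simp
  have ib: "integrable \<nu> (\<lambda>x. 2 / 3 * \<bar>s\<bar> ^ 3 * (Qop Q (\<lambda>y. \<bar>xc y\<bar> ^ 3) x + \<bar>qx x\<bar> ^ 3))"
    using iQ qx3(1) by simp
  have ae: "AE x in \<nu>. cmod (rr s x) \<le> 2 / 3 * \<bar>s\<bar> ^ 3 * (Qop Q (\<lambda>y. \<bar>xc y\<bar> ^ 3) x + \<bar>qx x\<bar> ^ 3)"
    using AE_Q by eventually_elim (unfold rr_def, rule rho_bound, auto)
  have "(\<integral>x. cmod (rr s x) \<partial>\<nu>) \<le> (\<integral>x. 2 / 3 * \<bar>s\<bar> ^ 3 * (Qop Q (\<lambda>y. \<bar>xc y\<bar> ^ 3) x + \<bar>qx x\<bar> ^ 3) \<partial>\<nu>)"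
    by (rule integral_mono_AE[OF _ ib ae]) (use rr_int in simp)
  also have "\<dots> = 2 / 3 * \<bar>s\<bar> ^ 3 * ((\<integral>x. Qop Q (\<lambda>y. \<bar>xc y\<bar> ^ 3) x \<partial>\<nu>) + (\<integral>x. \<bar>qx x\<bar> ^ 3 \<partial>\<nu>))"
    using iQ qx3(1) by simp
  also have "(\<integral>x. Qop Q (\<lambda>y. \<bar>xc y\<bar> ^ 3) x \<partial>\<nu>) = (\<integral>x. \<bar>xc x\<bar> ^ 3 \<partial>\<nu>)"
    using I(2) unfolding Qop_def by simp
  also have "2 / 3 * \<bar>s\<bar> ^ 3 * ((\<integral>x. \<bar>xc x\<bar> ^ 3 \<partial>\<nu>) + (\<integral>x. \<bar>qx x\<bar> ^ 3 \<partial>\<nu>))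
      \<le> 2 / 3 * \<bar>s\<bar> ^ 3 * ((\<integral>x. \<bar>xc x\<bar> ^ 3 \<partial>\<nu>) + (\<integral>x. \<bar>xc x\<bar> ^ 3 \<partial>\<nu>))"
    using qx3(2) by (intro mult_left_mono add_left_mono) auto
  finally show ?thesis by simp
qed

definition KK :: real where "KK = C0 * S2 / 2 + 4 / 3 * (\<integral>x. \<bar>xc x\<bar> ^ 3 \<partial>\<nu>)"

lemma rec_a: "cmod (amp s (Suc k) - complex_of_real (1 - s^2 * \<sigma>2 / 2) * amp s k) \<le> KK * \<bar>s\<bar> ^ 3"
proof -
  interpret prob_space M by (rule probM)
  define c where "c \<omega> = cis (s * Tw k \<omega>)" for \<omega>
  have cm[measurable]: "c \<in> borel_measurable M" unfolding c_def by simp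
  have cb: "cmod (c \<omega>) \<le> 1" for \<omega> unfolding c_def by simp
  have ipsi: "integrable M (\<lambda>\<omega>. complex_of_real (\<psi> (X k \<omega>)))" using int_X(1)[OF psi_m, of k] psi_int(1) by simp
  have irr: "integrable M (\<lambda>\<omega>. rr s (X k \<omega>))" using int_X(1)[OF rr_m[of s], of k] rr_int by simp
  have i1: "integrable M c" by (rule integrable_const_bound[where B=1]) (auto simp: cb)
  have i2: "integrable M (\<lambda>\<omega>. c \<omega> * complex_of_real (\<psi> (X k \<omega>)))" by (rule bdd_int[OF ipsi cm cb])
  have i3: "integrable M (\<lambda>\<omega>. c \<omega> * rr s (X k \<omega>))" by (rule bdd_int[OF irr cm cb])
  have pt: "c \<omega> * phi s (X k \<omega>) = complex_of_real (1 - s^2 * \<sigma>2 / 2) * c \<omega>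
       - complex_of_real (s^2 / 2) * (c \<omega> * complex_of_real (\<psi> (X k \<omega>))) + c \<omega> * rr s (X k \<omega>)" for \<omega>
    unfolding rr_def by (simp add: algebra_simps)
  have "amp s (Suc k) = (\<integral>\<omega>. c \<omega> * phi s (X k \<omega>) \<partial>M)" unfolding rec1 c_def ..
  also have "\<dots> = complex_of_real (1 - s^2 * \<sigma>2 / 2) * amp s k
       - complex_of_real (s^2 / 2) * (\<integral>\<omega>. c \<omega> * complex_of_real (\<psi> (X k \<omega>)) \<partial>M) + (\<integral>\<omega>. c \<omega> * rr s (X k \<omega>) \<partial>M)"
    unfolding pt amp_def c_def[symmetric] using i1 i2 i3 by simp
  finally have eq: "amp s (Suc k) - complex_of_real (1 - s^2 * \<sigma>2 / 2) * amp s k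
      = (\<integral>\<omega>. c \<omega> * rr s (X k \<omega>) \<partial>M) - complex_of_real (s^2 / 2) * (\<integral>\<omega>. c \<omega> * complex_of_real (\<psi> (X k \<omega>)) \<partial>M)"
    by simp
  have b1: "cmod (\<integral>\<omega>. c \<omega> * rr s (X k \<omega>) \<partial>M) \<le> 4 / 3 * \<bar>s\<bar> ^ 3 * (\<integral>x. \<bar>xc x\<bar> ^ 3 \<partial>\<nu>)"
  proof -
    have "cmod (\<integral>\<omega>. c \<omega> * rr s (X k \<omega>) \<partial>M) \<le> (\<integral>\<omega>. cmod (c \<omega> * rr s (X k \<omega>)) \<partial>M)"
      by (rule integral_norm_bound)
    also have "\<dots> \<le> (\<integral>\<omega>. cmod (rr s (X k \<omega>)) \<partial>M)"
    proof (rule integral_mono)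
      show "integrable M (\<lambda>\<omega>. cmod (c \<omega> * rr s (X k \<omega>)))" using i3 by (rule integrable_norm)
      show "integrable M (\<lambda>\<omega>. cmod (rr s (X k \<omega>)))" using irr by (rule integrable_norm)
      fix \<omega> show "cmod (c \<omega> * rr s (X k \<omega>)) \<le> cmod (rr s (X k \<omega>))"
        using cb[of \<omega>] by (simp add: norm_mult mult_left_le_one_le)
    qed
    also have "\<dots> = (\<integral>x. cmod (rr s x) \<partial>\<nu>)" using int_X(2)[of "\<lambda>x. cmod (rr s x)" k] by simp
    also note rr_bound_int
    finally show ?thesis .
  qed
  have b2: "cmod (complex_of_real (s^2 / 2) * (\<integral>\<omega>. c \<omega> * complex_of_real (\<psi> (X k \<omega>)) \<partial>M)) \<le> s^2 / 2 * (\<bar>s\<bar> * C0 * S2)"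
  proof -
    have "cmod (complex_of_real (s^2 / 2)) = s^2 / 2" by (simp only: norm_of_real) simp
    moreover have "cmod (\<integral>\<omega>. c \<omega> * complex_of_real (\<psi> (X k \<omega>)) \<partial>M) \<le> \<bar>s\<bar> * C0 * S2"
      unfolding c_def by (rule psi_term)
    moreover have "0 \<le> s^2 / 2" by simp
    ultimately show ?thesis unfolding norm_mult by (simp only:) (rule mult_left_mono)
  qed
  have "cmod (amp s (Suc k) - complex_of_real (1 - s^2 * \<sigma>2 / 2) * amp s k)
      \<le> 4 / 3 * \<bar>s\<bar> ^ 3 * (\<integral>x. \<bar>xc x\<bar> ^ 3 \<partial>\<nu>) + s^2 / 2 * (\<bar>s\<bar> * C0 * S2)"
    unfolding eq by (rule order_trans[OF norm_triangle_ineq4 add_mono[OF b1 b2]])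
  also have "\<dots> = KK * \<bar>s\<bar> ^ 3" unfolding KK_def by (simp add: power2_eq_square power3_eq_cube algebra_simps)
  finally show ?thesis .
qed

end

lemma geo_le:
  fixes r :: real
  assumes "0 \<le> r" "r < 1"
  shows "(\<Sum>j<n. r ^ j) \<le> 1 / (1 - r)"
proof -
  have "(\<Sum>j<n. r ^ j) = (1 - r ^ n) / (1 - r)" using sum_gp_strict[of r n] assms by simp
  also have "\<dots> \<le> 1 / (1 - r)" using assms by (intro divide_right_mono) auto
  finally show ?thesis .
qed

lemma pow_diff_le:
  fixes l m :: real
  assumes "0 \<le> l" "l \<le> m" "m \<le> 1"
  shows "0 \<le> m ^ n - l ^ n \<and> m ^ n - l ^ n \<le> (m - l) * (\<Sum>j<n. m ^ j)"
proof (induction n)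
  case 0 then show ?case by simp
next
  case (Suc n)
  have mn: "l ^ n \<le> m ^ n" by (rule power_mono) (use assms in auto)
  have m1: "l ^ Suc n \<le> m ^ Suc n" by (rule power_mono) (use assms in auto)
  have "m ^ Suc n - l ^ Suc n = (m - l) * m ^ n + l * (m ^ n - l ^ n)" by (simp add: algebra_simps)
  also have "l * (m ^ n - l ^ n) \<le> 1 * (m ^ n - l ^ n)"
    by (rule mult_right_mono) (use assms Suc.IH in auto)
  also have "(m - l) * m ^ n + 1 * (m ^ n - l ^ n) \<le> (m - l) * m ^ n + (m - l) * (\<Sum>j<n. m ^ j)"
    using Suc.IH by simp
  also have "\<dots> = (m - l) * (\<Sum>j<Suc n. m ^ j)" by (simp add: algebra_simps)
  finally show ?case using m1 by simp
qed

lemma exp_facts: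
  fixes y :: real
  assumes "0 \<le> y" "y \<le> 1/2"
  shows "1 - y \<le> exp (- y)" "exp (- y) - (1 - y) \<le> y ^ 2" "2 * y / 3 \<le> 1 - exp (- y)" "exp (- y) \<le> 1"
proof -
  show "1 - y \<le> exp (- y)" using exp_ge_add_one_self[of "- y"] by simp
  have ey: "1 + y \<le> exp y" by simp
  have ep: "0 < exp y" by simp
  have le: "exp (- y) \<le> 1 / (1 + y)"
  proof -
    have "exp (- y) = 1 / exp y" by (simp add: exp_minus')
    also have "\<dots> \<le> 1 / (1 + y)" using assms ey by (intro divide_left_mono) auto
    finally show ?thesis .
  qed
  have "1 / (1 + y) - (1 - y) = y ^ 2 / (1 + y)" using assms by (simp add: field_simps power2_eq_square)
  also have "\<dots> \<le> y ^ 2" using assms by (simp add: divide_le_eq mult_le_cancel_left1 power2_eq_square)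
  finally show "exp (- y) - (1 - y) \<le> y ^ 2" using le by simp
  have "2 * y / 3 \<le> y / (1 + y)"
  proof -
    have "y * (y * 2) \<le> y * 1" using assms by (intro mult_left_mono) auto
    then show ?thesis using assms by (simp add: field_simps)
  qed
  also have "y / (1 + y) = 1 - 1 / (1 + y)" using assms by (simp add: field_simps)
  also have "\<dots> \<le> 1 - exp (- y)" using le by simp
  finally show "2 * y / 3 \<le> 1 - exp (- y)" .
  show "exp (- y) \<le> 1" using assms by simp
qed

context setting begin

lemma amp_0: "amp s 0 = 1"
proof -
  interpret prob_space M by (rule probM)
  show ?thesis unfolding amp_def by (simp add: Tw_0 prob_space)
qed

lemma amp_zero_s: "amp 0 n = 1"
proof -
  interpret prob_space M by (rule probM)
  show ?thesis unfolding amp_def by (simp add: prob_space)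
qed

lemma S2_nn: "0 \<le> S2" unfolding S2_def by (rule suminf_nonneg[OF bet_summable bet_nn])

lemma KK_nn: "0 \<le> KK"
proof -
  have "0 \<le> (\<integral>x. \<bar>xc x\<bar> ^ 3 \<partial>\<nu>)" by (intro integral_nonneg_AE) auto
  then show ?thesis unfolding KK_def using C0_nn S2_nn by simp
qed

lemma amp_iter:
  assumes l0: "0 \<le> 1 - s^2 * \<sigma>2 / 2" and l1: "1 - s^2 * \<sigma>2 / 2 \<le> 1"
  shows "cmod (amp s n - complex_of_real ((1 - s^2 * \<sigma>2 / 2) ^ n)) \<le> KK * \<bar>s\<bar> ^ 3 * (\<Sum>j<n. (1 - s^2 * \<sigma>2 / 2) ^ j)"
proof (induction n)
  case 0 then show ?case by (simp add: amp_0)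
next
  case (Suc n)
  define l where "l = 1 - s^2 * \<sigma>2 / 2"
  have IH: "cmod (amp s n - complex_of_real (l ^ n)) \<le> KK * \<bar>s\<bar> ^ 3 * (\<Sum>j<n. l ^ j)" using Suc.IH unfolding l_def .
  have R: "cmod (amp s (Suc n) - complex_of_real l * amp s n) \<le> KK * \<bar>s\<bar> ^ 3" using rec_a unfolding l_def .
  have lnn: "0 \<le> l" using l0 unfolding l_def .
  have eq: "amp s (Suc n) - complex_of_real (l ^ Suc n) = (amp s (Suc n) - complex_of_real l * amp s n) + complex_of_real l * (amp s n - complex_of_real (l ^ n))"
    by (simp add: algebra_simps)
  have "cmod (amp s (Suc n) - complex_of_real (l ^ Suc n)) \<le> cmod (amp s (Suc n) - complex_of_real l * amp s n) + cmod (complex_of_real l * (amp s n - complex_of_real (l ^ n)))"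
    unfolding eq by (rule norm_triangle_ineq)
  also have "\<dots> = cmod (amp s (Suc n) - complex_of_real l * amp s n) + l * cmod (amp s n - complex_of_real (l ^ n))"
    using lnn by (simp add: norm_mult)
  also have "\<dots> \<le> KK * \<bar>s\<bar> ^ 3 + l * (KK * \<bar>s\<bar> ^ 3 * (\<Sum>j<n. l ^ j))"
    using R IH lnn by (intro add_mono mult_left_mono) auto
  also have "\<dots> = KK * \<bar>s\<bar> ^ 3 * (\<Sum>j<Suc n. l ^ j)"
  proof -
    have "(\<Sum>j<Suc n. l ^ j) = 1 + l * (\<Sum>j<n. l ^ j)"
      by (simp only: sum.lessThan_Suc_shift) (simp add: sum_distrib_left)
    then show ?thesis by (simp add: algebra_simps)
  qed
  finally show ?case unfolding l_def .
qed

lemma main_bound: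
  "\<exists>C>0. \<forall>n::nat. \<forall>t::real. n \<ge> 1 \<longrightarrow> \<bar>t\<bar> \<le> sqrt (real n) \<longrightarrow>
     cmod (amp (t / (sqrt \<sigma>2 * sqrt (real n))) n - complex_of_real (exp (- t\<^sup>2 / 2))) \<le> C * \<bar>t\<bar> / sqrt (real n)"
proof (intro exI[of _ "2 * KK / (\<sigma>2 * sqrt \<sigma>2) + 1"] conjI allI impI)
  have sp: "0 < sqrt \<sigma>2" using sigp by simp
  show "0 < 2 * KK / (\<sigma>2 * sqrt \<sigma>2) + 1" using KK_nn sigp sp by (simp add: add_nonneg_pos)
  fix n :: nat and t :: real
  assume n: "1 \<le> n" and tn: "\<bar>t\<bar> \<le> sqrt (real n)"
  have np: "0 < real n" using n by simp
  have sn: "0 < sqrt (real n)" using np by simp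
  show "cmod (amp (t / (sqrt \<sigma>2 * sqrt (real n))) n - complex_of_real (exp (- t\<^sup>2 / 2)))
        \<le> (2 * KK / (\<sigma>2 * sqrt \<sigma>2) + 1) * \<bar>t\<bar> / sqrt (real n)"
  proof (cases "t = 0")
    case True then show ?thesis by (simp add: amp_zero_s)
  next
    case False
    define s where "s = t / (sqrt \<sigma>2 * sqrt (real n))"
    define x where "x = t\<^sup>2 / real n"
    define y where "y = x / 2"
    define l where "l = 1 - s^2 * \<sigma>2 / 2"
    have t2: "t\<^sup>2 \<le> real n" using power_mono[OF tn, of 2] by simp
    have xp: "0 < x" unfolding x_def using False np by simp
    have x1: "x \<le> 1" unfolding x_def using t2 np by simp
    have s2: "s^2 = x / \<sigma>2" unfolding s_def x_def using sigp np by (simp add: power_divide power_mult_distrib)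
    have s2x: "s^2 * \<sigma>2 = x" using s2 sigp by simp
    have ll: "l = 1 - y" unfolding l_def y_def s2x ..
    have y0: "0 < y" and y1: "y \<le> 1/2" using xp x1 unfolding y_def by auto
    have l0: "0 \<le> 1 - s^2 * \<sigma>2 / 2" and l1: "1 - s^2 * \<sigma>2 / 2 \<le> 1" using s2x xp x1 by auto
    note A = amp_iter[OF l0 l1, of n]
    have geo: "(\<Sum>j<n. l ^ j) \<le> 2 / x"
    proof -
      have "(\<Sum>j<n. l ^ j) \<le> 1 / (1 - l)" by (rule geo_le) (use ll y0 y1 in auto)
      also have "1 / (1 - l) = 2 / x" using ll unfolding y_def by simp
      finally show ?thesis .
    qed
    have part1: "cmod (amp s n - complex_of_real (l ^ n)) \<le> 2 * KK * \<bar>s\<bar> / \<sigma>2"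
    proof -
      have "cmod (amp s n - complex_of_real (l ^ n)) \<le> KK * \<bar>s\<bar> ^ 3 * (\<Sum>j<n. l ^ j)" using A unfolding l_def .
      also have "\<dots> \<le> KK * \<bar>s\<bar> ^ 3 * (2 / x)" using KK_nn geo by (intro mult_left_mono) auto
      also have "KK * \<bar>s\<bar> ^ 3 * (2 / x) = 2 * KK * \<bar>s\<bar> / \<sigma>2"
      proof -
        have "\<bar>s\<bar> ^ 3 = \<bar>s\<bar> * s^2" by (simp add: power3_eq_cube power2_eq_square)
        then show ?thesis using s2 xp sigp by (simp add: field_simps)
      qed
      finally show ?thesis .
    qed
    define \<mu> where "\<mu> = exp (- y)"
    note EF = exp_facts[OF less_imp_le[OF y0] y1]
    have ex: "exp (- t\<^sup>2 / 2) = \<mu> ^ n"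
    proof -
      have "- t\<^sup>2 / 2 = real n * (- y)" unfolding y_def x_def using np by simp
      then have "exp (- t\<^sup>2 / 2) = exp (real n * (- y))" by simp
      also have "\<dots> = exp (- y) ^ n" by (rule exp_of_nat_mult)
      finally show ?thesis unfolding \<mu>_def .
    qed
    have pd: "0 \<le> \<mu> ^ n - l ^ n \<and> \<mu> ^ n - l ^ n \<le> (\<mu> - l) * (\<Sum>j<n. \<mu> ^ j)"
      by (rule pow_diff_le) (use ll y1 EF in \<open>auto simp: \<mu>_def\<close>)
    have mu1: "\<mu> < 1" unfolding \<mu>_def using y0 by simp
    have part2: "\<mu> ^ n - l ^ n \<le> \<bar>t\<bar> / sqrt (real n)"
    proof -
      have "\<mu> ^ n - l ^ n \<le> (\<mu> - l) * (\<Sum>j<n. \<mu> ^ j)" using pd by simp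
      also have "\<dots> \<le> y^2 * (1 / (1 - \<mu>))"
        by (intro mult_mono geo_le) (use EF ll mu1 in \<open>auto simp: \<mu>_def intro: sum_nonneg\<close>)
      also have "\<dots> \<le> y^2 * (3 / (2 * y))"
      proof (intro mult_left_mono)
        have "2 * y / 3 \<le> 1 - \<mu>" using EF unfolding \<mu>_def by simp
        then show "1 / (1 - \<mu>) \<le> 3 / (2 * y)" using y0 by (simp add: field_simps)
      qed simp
      also have "\<dots> = 3 * x / 4" using y0 unfolding y_def by (simp add: field_simps power2_eq_square)
      also have "\<dots> \<le> sqrt x"
      proof -
        have "x \<le> sqrt x" using x1 xp by (simp add: real_le_rsqrt power2_eq_square mult_le_cancel_left1)
        then show ?thesis using xp by simp
      qed
      also have "sqrt x = \<bar>t\<bar> / sqrt (real n)" unfolding x_def by (simp add: real_sqrt_divide)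
      finally show ?thesis .
    qed
    have "cmod (amp s n - complex_of_real (\<mu> ^ n))
        \<le> cmod (amp s n - complex_of_real (l ^ n)) + cmod (complex_of_real (l ^ n) - complex_of_real (\<mu> ^ n))"
    proof -
      have "amp s n - complex_of_real (\<mu> ^ n) = (amp s n - complex_of_real (l ^ n)) + (complex_of_real (l ^ n) - complex_of_real (\<mu> ^ n))"
        by simp
      then show ?thesis by (metis norm_triangle_ineq)
    qed
    also have "cmod (complex_of_real (l ^ n) - complex_of_real (\<mu> ^ n)) = \<mu> ^ n - l ^ n"
    proof -
      have "cmod (complex_of_real (l ^ n) - complex_of_real (\<mu> ^ n)) = \<bar>l ^ n - \<mu> ^ n\<bar>"
        by (metis norm_of_real of_real_diff)
      then show ?thesis using pd by simp
    qed
    finally have "cmod (amp s n - complex_of_real (\<mu> ^ n)) \<le> 2 * KK * \<bar>s\<bar> / \<sigma>2 + \<bar>t\<bar> / sqrt (real n)"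
      using part1 part2 by simp
    also have "2 * KK * \<bar>s\<bar> / \<sigma>2 + \<bar>t\<bar> / sqrt (real n) = (2 * KK / (\<sigma>2 * sqrt \<sigma>2) + 1) * \<bar>t\<bar> / sqrt (real n)"
      unfolding s_def using sp sn sigp by (simp add: abs_mult abs_divide field_simps)
    finally show ?thesis unfolding ex s_def .
  qed
qed

end


theorem proposition4p1:
  fixes M :: "'w measure" and E :: "'e measure" and \<nu> :: "'e measure"
    and Q :: "'e \<Rightarrow> 'e measure" and X :: "nat \<Rightarrow> 'w \<Rightarrow> 'e"
    and B :: "('e \<Rightarrow> complex) set" and nB :: "('e \<Rightarrow> complex) \<Rightarrow> real"
    and \<xi> :: "'e \<Rightarrow> real"
  assumes "transition_prob E Q"
    and "invariant_prob E Q \<nu>"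
    and "markov_chain M E Q X"
    and "distr M E (X 0) = \<nu>"
    and "banach_fun_space E B nB"
    and "H1 E \<nu> Q B nB"
    and "H2 \<nu> Q (xi_check Q B nB \<xi>)"
    and "\<forall>f\<in>B. integrable \<nu> (\<lambda>x. (cmod (f x)) ^ 3)"
    and "\<xi> \<in> borel_measurable E"
    and "(\<lambda>x. complex_of_real (\<xi> x)) \<in> B"
    and "(\<integral>x. \<xi> x \<partial>\<nu>) = 0"
    and "sigma2 \<nu> Q (xi_check Q B nB \<xi>) > 0"
  shows "\<exists>C>0. \<forall>n::nat. \<forall>t::real. n \<ge> 1 \<longrightarrow> \<bar>t\<bar> \<le> sqrt (real n) \<longrightarrow>
    cmod ((\<integral>\<omega>. cis (t * (\<Sum>k\<in>{1..n}. xi_check Q B nB \<xi> (X k \<omega>)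
                                  - Qop Q (xi_check Q B nB \<xi>) (X (k - 1) \<omega>))
                    / (sqrt (sigma2 \<nu> Q (xi_check Q B nB \<xi>)) * sqrt (real n))) \<partial>M)
          - complex_of_real (exp (- t\<^sup>2 / 2)))
    \<le> C * \<bar>t\<bar> / sqrt (real n)"
proof -
  define xc where "xc = xi_check Q B nB \<xi>"
  interpret bspace E B nB by unfold_locales (rule assms(5))
  define g where "g = (THE g. g \<in> B \<and> (\<lambda>N. nB ((\<Sum>n<N. (Qop Q ^^ n) (\<lambda>y. complex_of_real (\<xi> y))) - g)) \<longlonglongrightarrow> 0)"
  have mean0: "(\<integral>x. complex_of_real (\<xi> x) \<partial>\<nu>) = 0" using assms(11) by simp
  have gB: "g \<in> B" unfolding g_def by (rule xi_limit[OF assms(6) assms(10) mean0])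
  have xce: "xc = (\<lambda>x. Re (g x))" unfolding xc_def xi_check_def g_def ..
  have nuE: "sets \<nu> = sets E" using assms(2) unfolding invariant_prob_def by simp
  have gm: "g \<in> borel_measurable E" using gB Bmeas by blast
  have xcm: "xc \<in> borel_measurable E" unfolding xce using gm by simp
  have g3: "integrable \<nu> (\<lambda>x. (cmod (g x)) ^ 3)" using assms(8) gB by blast
  have xc3: "integrable \<nu> (\<lambda>x. \<bar>xc x\<bar> ^ 3)"
  proof (rule Bochner_Integration.integrable_bound[OF g3])
    show "(\<lambda>x. \<bar>xc x\<bar> ^ 3) \<in> borel_measurable \<nu>" using xcm by (simp add: measurable_cong_sets[OF nuE refl])
    show "AE x in \<nu>. norm (\<bar>xc x\<bar> ^ 3) \<le> norm ((cmod (g x)) ^ 3)"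
    proof (rule AE_I2)
      fix x
      have "\<bar>xc x\<bar> \<le> cmod (g x)" unfolding xce by (rule abs_Re_le_cmod)
      then have "\<bar>xc x\<bar> ^ 3 \<le> (cmod (g x)) ^ 3" by (rule power_mono) simp
      then show "norm (\<bar>xc x\<bar> ^ 3) \<le> norm ((cmod (g x)) ^ 3)" by simp
    qed
  qed
  have H2': "\<And>p. integrable \<nu> (\<lambda>x. \<bar>(Qop Q ^^ p) (psi \<nu> Q xc) x\<bar> powr (3/2))"
    "summable (\<lambda>p. (\<integral>x. \<bar>(Qop Q ^^ p) (psi \<nu> Q xc) x\<bar> powr (3/2) \<partial>\<nu>) powr (2/3))"
    using assms(7) unfolding H2_def xc_def by auto
  interpret S: setting M E Q X \<nu> xc
    by unfold_locales (use assms(1-4) xcm xc3 H2' assms(12) in \<open>auto simp: xc_def\<close>)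
  obtain C where C: "C > 0" and CB: "\<And>n t. n \<ge> 1 \<Longrightarrow> \<bar>t\<bar> \<le> sqrt (real n) \<Longrightarrow>
     cmod (S.amp (t / (sqrt (sigma2 \<nu> Q xc) * sqrt (real n))) n - complex_of_real (exp (- t\<^sup>2 / 2))) \<le> C * \<bar>t\<bar> / sqrt (real n)"
    using S.main_bound by blast
  show ?thesis
  proof (intro exI[of _ C] conjI allI impI C)
    fix n :: nat and t :: real
    assume n: "n \<ge> 1" and tn: "\<bar>t\<bar> \<le> sqrt (real n)"
    have eq: "(\<integral>\<omega>. cis (t * (\<Sum>k\<in>{1..n}. xi_check Q B nB \<xi> (X k \<omega>)
                                  - Qop Q (xi_check Q B nB \<xi>) (X (k - 1) \<omega>))
                    / (sqrt (sigma2 \<nu> Q (xi_check Q B nB \<xi>)) * sqrt (real n))) \<partial>M)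
        = S.amp (t / (sqrt (sigma2 \<nu> Q xc) * sqrt (real n))) n"
    proof -
      have "S.amp (t / (sqrt (sigma2 \<nu> Q xc) * sqrt (real n))) n
          = (\<integral>\<omega>. cis ((t / (sqrt (sigma2 \<nu> Q xc) * sqrt (real n))) * S.Tw n \<omega>) \<partial>M)"
        by (rule S.amp_def)
      also have "\<dots> = (\<integral>\<omega>. cis (t * (\<Sum>k\<in>{1..n}. xc (X k \<omega>) - Qop Q xc (X (k - 1) \<omega>))
                    / (sqrt (sigma2 \<nu> Q xc) * sqrt (real n))) \<partial>M)"
        by (intro Bochner_Integration.integral_cong refl arg_cong[where f=cis]) (simp add: S.Tw_def)
      finally show ?thesis unfolding xc_def by simp
    qed
    show "cmod ((\<integral>\<omega>. cis (t * (\<Sum>k\<in>{1..n}. xi_check Q B nB \<xi> (X k \<omega>)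
                                  - Qop Q (xi_check Q B nB \<xi>) (X (k - 1) \<omega>))
                    / (sqrt (sigma2 \<nu> Q (xi_check Q B nB \<xi>)) * sqrt (real n))) \<partial>M)
          - complex_of_real (exp (- t\<^sup>2 / 2)))
    \<le> C * \<bar>t\<bar> / sqrt (real n)"
      unfolding eq by (rule CB[OF n tn])
  qed
qed

end
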